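(* Let $\mathcal{A}$ be a unital $A_\infty$ pre-category, $(A_1,A_2,A_3)$ a transversal triple, and $e_{1,2}\in\mathrm{Mor}(A_1,A_2)$, $e_{2,3}\in\mathrm{Mor}(A_2,A_3)$ quasi-isomorphisms. Then $e_{1,3}=m_2(e_{2,3},e_{1,2})\in\mathrm{Mor}(A_1,A_3)$ is a quasi-isomorphism.
   Context: An $A_\infty$ pre-category consists of a set of objects; for each $k\ge1$ a set of transversal $k$-tuples, such that forgetting entries of a transversal tuple yields a transversal tuple; for each transversal pair $(A,B)$ a $\mathbb{Z}/2$-graded vector space $\mathrm{Mor}(A,B)$; and for each transversal $(A_0,\dots,A_n)$ maps $m_n:\mathrm{Mor}(A_{n-1},A_n)\otimes\cdots\otimes\mathrm{Mor}(A_0,A_1)\to\mathrm{Mor}(A_0,A_n)$ satisfying the $A_\infty$ equations $\sum(-1)^{\maltese_d}m(\dots,m(\dots),\dots)=0$ with $\maltese_d=d+\sum_{i\le d}\deg$. An element $f\in\mathrm{Mor}(A,A')$ with $m_1(f)=0$ is a quasi-isomorphism if $m_2(\cdot,f):\mathrm{Mor}(A',B')\to\mathrm{Mor}(A,B')$ and $m_2(f,\cdot):\mathrm{Mor}(B,A)\to\mathrm{Mor}(B,A')$ induce isomorphisms on $m_1$-homology whenever $(A,A',B')$, resp. $(B,A,A')$, is transversal. The pre-category is unital if for every object $A$ and finite collection of transversal sequences $S_i$ there are objects $A^+,A^-$ quasi-isomorphic to $A$ with all $(A^-,S_i,A^+)$ transversal. *)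

theory Defs
  imports Complex_Main "HOL-Library.Sublist"
begin

text \<open>Data of an A-infinity pre-category.
  trans: the transversal tuples (as lists of objects).
  morh A B d: the degree-d part (d = 0 or 1) of the Z/2-graded space Mor(A,B).
  mu os xs: for os = [A0,...,An] and xs = [a1,...,an] with ai in Mor(A(i-1),Ai),
    mu os xs is m_n(an,...,a1) in Mor(A0,An)  (arguments listed in reversed order).
  scl: scalar multiplication of the ground field.\<close>

record ('o, 'k, 'm) ainf_pre =
  trans :: "'o list \<Rightarrow> bool"
  morh  :: "'o \<Rightarrow> 'o \<Rightarrow> nat \<Rightarrow> 'm set"
  mu    :: "'o list \<Rightarrow> 'm list \<Rightarrow> 'm"
  scl   :: "'k \<Rightarrow> 'm \<Rightarrow> 'm"

definition mor :: "('o, 'k, 'm::ab_group_add) ainf_pre \<Rightarrow> 'o \<Rightarrow> 'o \<Rightarrow> 'm set" where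
  "mor C A B = {x + y | x y. x \<in> morh C A B 0 \<and> y \<in> morh C A B 1}"

definition ainf_precat :: "('o, 'k::field, 'm::ab_group_add) ainf_pre \<Rightarrow> bool" where
  "ainf_precat C \<longleftrightarrow>
     vector_space (scl C) \<and>
     (\<forall>os. trans C os \<longrightarrow> os \<noteq> []) \<and>
     (\<forall>os ys. trans C os \<and> subseq ys os \<and> ys \<noteq> [] \<longrightarrow> trans C ys) \<and>
     (\<forall>A B. trans C [A, B] \<longrightarrow>
        (\<forall>d<2. module.subspace (scl C) (morh C A B d)) \<and>
        morh C A B 0 \<inter> morh C A B 1 = {0}) \<and>
     \<comment> \<open>m_n maps into Mor(A0,An)\<close>
     (\<forall>os xs. trans C os \<and> xs \<noteq> [] \<and> length os = length xs + 1 \<and>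
        (\<forall>i<length xs. xs ! i \<in> mor C (os ! i) (os ! Suc i))
        \<longrightarrow> mu C os xs \<in> mor C (hd os) (last os)) \<and>
     \<comment> \<open>m_n has degree n mod 2 (i.e. 2 - n)\<close>
     (\<forall>os xs ds. trans C os \<and> xs \<noteq> [] \<and> length os = length xs + 1 \<and>
        length ds = length xs \<and>
        (\<forall>i<length xs. ds ! i < 2 \<and> xs ! i \<in> morh C (os ! i) (os ! Suc i) (ds ! i))
        \<longrightarrow> mu C os xs \<in> morh C (hd os) (last os) ((length xs + sum_list ds) mod 2)) \<and>
     \<comment> \<open>m_n is multilinear\<close>
     (\<forall>os xs j y z c. trans C os \<and> length os = length xs + 1 \<and> j < length xs \<and>
        (\<forall>i<length xs. i \<noteq> j \<longrightarrow> xs ! i \<in> mor C (os ! i) (os ! Suc i)) \<and>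
        y \<in> mor C (os ! j) (os ! Suc j) \<and> z \<in> mor C (os ! j) (os ! Suc j)
        \<longrightarrow> mu C os (xs[j := y + z]) = mu C os (xs[j := y]) + mu C os (xs[j := z]) \<and>
            mu C os (xs[j := scl C c y]) = scl C c (mu C os (xs[j := y]))) \<and>
     \<comment> \<open>A-infinity equations, on homogeneous inputs\<close>
     (\<forall>os xs ds. trans C os \<and> xs \<noteq> [] \<and> length os = length xs + 1 \<and>
        length ds = length xs \<and>
        (\<forall>i<length xs. ds ! i < 2 \<and> xs ! i \<in> morh C (os ! i) (os ! Suc i) (ds ! i))
        \<longrightarrow> (\<Sum>d<length xs. \<Sum>k\<in>{1..length xs - d}.
               scl C ((-1::'k) ^ (d + sum_list (take d ds)))
                 (mu C (take (Suc d) os @ drop (d + k) os)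
                    (take d xs @ [mu C (take (Suc k) (drop d os)) (take k (drop d xs))]
                       @ drop (d + k) xs))) = 0)"

definition cycles :: "('o, 'k, 'm::ab_group_add) ainf_pre \<Rightarrow> 'o \<Rightarrow> 'o \<Rightarrow> 'm set" where
  "cycles C A B = {x \<in> mor C A B. mu C [A, B] [x] = 0}"

definition bounds :: "('o, 'k, 'm::ab_group_add) ainf_pre \<Rightarrow> 'o \<Rightarrow> 'o \<Rightarrow> 'm set" where
  "bounds C A B = (\<lambda>x. mu C [A, B] [x]) ` mor C A B"

definition hclass :: "('o, 'k, 'm::ab_group_add) ainf_pre \<Rightarrow> 'o \<Rightarrow> 'o \<Rightarrow> 'm \<Rightarrow> 'm set" where
  "hclass C A B x = {x + b | b. b \<in> bounds C A B}"

definition homology :: "('o, 'k, 'm::ab_group_add) ainf_pre \<Rightarrow> 'o \<Rightarrow> 'o \<Rightarrow> 'm set set" where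
  "homology C A B = hclass C A B ` cycles C A B"

definition induces_iso ::
  "('o, 'k, 'm::ab_group_add) ainf_pre \<Rightarrow> 'o \<Rightarrow> 'o \<Rightarrow> 'o \<Rightarrow> 'o \<Rightarrow> ('m \<Rightarrow> 'm) \<Rightarrow> bool" where
  "induces_iso C A B A' B' phi \<longleftrightarrow>
     phi ` cycles C A B \<subseteq> cycles C A' B' \<and>
     phi ` bounds C A B \<subseteq> bounds C A' B' \<and>
     bij_betw (\<lambda>c. hclass C A' B' (phi (SOME x. x \<in> c))) (homology C A B) (homology C A' B')"

definition quasi_iso :: "('o, 'k, 'm::ab_group_add) ainf_pre \<Rightarrow> 'o \<Rightarrow> 'o \<Rightarrow> 'm \<Rightarrow> bool" where
  "quasi_iso C A A' f \<longleftrightarrow>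
     trans C [A, A'] \<and> f \<in> mor C A A' \<and> mu C [A, A'] [f] = 0 \<and>
     (\<forall>B'. trans C [A, A', B'] \<longrightarrow>
        induces_iso C A' B' A B' (\<lambda>x. mu C [A, A', B'] [f, x])) \<and>
     (\<forall>B. trans C [B, A, A'] \<longrightarrow>
        induces_iso C B A B A' (\<lambda>x. mu C [B, A, A'] [x, f]))"

definition unital :: "('o, 'k, 'm::ab_group_add) ainf_pre \<Rightarrow> bool" where
  "unital C \<longleftrightarrow>
     (\<forall>A S. finite S \<and> (\<forall>s\<in>S. trans C s) \<longrightarrow>
        (\<exists>Am Ap. (\<exists>g. quasi_iso C Am A g) \<and> (\<exists>h. quasi_iso C A Ap h) \<and>
                 (\<forall>s\<in>S. trans C (Am # s @ [Ap]))))"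

end

theory Submission
  imports Defs
begin

lemma all_lt2: "(\<forall>i<Suc (Suc 0). P i) \<longleftrightarrow> P 0 \<and> P 1"
  by (auto simp: less_Suc_eq)
lemma all_lt3: "(\<forall>i<Suc (Suc (Suc 0)). P i) \<longleftrightarrow> P 0 \<and> P 1 \<and> P 2"
  by (auto simp: less_Suc_eq numeral_2_eq_2)

locale AP = fixes C :: "('o, 'k::field, 'm::ab_group_add) ainf_pre"
  assumes AP: "ainf_precat C"
begin

lemma APc: "vector_space (scl C)" "\<forall>os. trans C os \<longrightarrow> os \<noteq> []"
  "\<forall>os ys. trans C os \<and> subseq ys os \<and> ys \<noteq> [] \<longrightarrow> trans C ys"
  "\<forall>A B. trans C [A, B] \<longrightarrow> (\<forall>d<2. module.subspace (scl C) (morh C A B d)) \<and> morh C A B 0 \<inter> morh C A B 1 = {0}"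
  "\<forall>os xs. trans C os \<and> xs \<noteq> [] \<and> length os = length xs + 1 \<and>
        (\<forall>i<length xs. xs ! i \<in> mor C (os ! i) (os ! Suc i))
        \<longrightarrow> mu C os xs \<in> mor C (hd os) (last os)"
  "\<forall>os xs ds. trans C os \<and> xs \<noteq> [] \<and> length os = length xs + 1 \<and>
        length ds = length xs \<and>
        (\<forall>i<length xs. ds ! i < 2 \<and> xs ! i \<in> morh C (os ! i) (os ! Suc i) (ds ! i))
        \<longrightarrow> mu C os xs \<in> morh C (hd os) (last os) ((length xs + sum_list ds) mod 2)"
  "\<forall>os xs j y z c. trans C os \<and> length os = length xs + 1 \<and> j < length xs \<and>
        (\<forall>i<length xs. i \<noteq> j \<longrightarrow> xs ! i \<in> mor C (os ! i) (os ! Suc i)) \<and>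
        y \<in> mor C (os ! j) (os ! Suc j) \<and> z \<in> mor C (os ! j) (os ! Suc j)
        \<longrightarrow> mu C os (xs[j := y + z]) = mu C os (xs[j := y]) + mu C os (xs[j := z]) \<and>
            mu C os (xs[j := scl C c y]) = scl C c (mu C os (xs[j := y]))"
  "\<forall>os xs ds. trans C os \<and> xs \<noteq> [] \<and> length os = length xs + 1 \<and>
        length ds = length xs \<and>
        (\<forall>i<length xs. ds ! i < 2 \<and> xs ! i \<in> morh C (os ! i) (os ! Suc i) (ds ! i))
        \<longrightarrow> (\<Sum>d<length xs. \<Sum>k\<in>{1..length xs - d}.
               scl C ((-1::'k) ^ (d + sum_list (take d ds)))
                 (mu C (take (Suc d) os @ drop (d + k) os)
                    (take d xs @ [mu C (take (Suc k) (drop d os)) (take k (drop d xs))]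
                       @ drop (d + k) xs))) = 0"
  using AP[unfolded ainf_precat_def] by - (insert AP[unfolded ainf_precat_def], (elim conjE, assumption))+

lemma vs: "vector_space (scl C)" by (rule APc(1))

lemma trans_sub: "trans C os \<Longrightarrow> subseq ys os \<Longrightarrow> ys \<noteq> [] \<Longrightarrow> trans C ys"
  using APc(3) by blast

lemma morh_sub: "trans C [A,B] \<Longrightarrow> d < 2 \<Longrightarrow> module.subspace (scl C) (morh C A B d)"
  using APc(4) by blast

lemma morh_int: "trans C [A,B] \<Longrightarrow> morh C A B 0 \<inter> morh C A B 1 = {0}"
  using APc(4) by blast

lemma ax_closed: "trans C os \<Longrightarrow> xs \<noteq> [] \<Longrightarrow> length os = length xs + 1 \<Longrightarrow>
        (\<forall>i<length xs. xs ! i \<in> mor C (os ! i) (os ! Suc i))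
        \<Longrightarrow> mu C os xs \<in> mor C (hd os) (last os)"
  using APc(5) by blast

lemma ax_deg: "trans C os \<Longrightarrow> xs \<noteq> [] \<Longrightarrow> length os = length xs + 1 \<Longrightarrow>
        length ds = length xs \<Longrightarrow>
        (\<forall>i<length xs. ds ! i < 2 \<and> xs ! i \<in> morh C (os ! i) (os ! Suc i) (ds ! i))
        \<Longrightarrow> mu C os xs \<in> morh C (hd os) (last os) ((length xs + sum_list ds) mod 2)"
  using APc(6) by blast

lemma ax_lin: "trans C os \<Longrightarrow> length os = length xs + 1 \<Longrightarrow> j < length xs \<Longrightarrow>
        (\<forall>i<length xs. i \<noteq> j \<longrightarrow> xs ! i \<in> mor C (os ! i) (os ! Suc i)) \<Longrightarrow>
        y \<in> mor C (os ! j) (os ! Suc j) \<Longrightarrow> z \<in> mor C (os ! j) (os ! Suc j)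
        \<Longrightarrow> mu C os (xs[j := y + z]) = mu C os (xs[j := y]) + mu C os (xs[j := z])"
  using APc(7) by blast

lemma ax_ainf: "trans C os \<Longrightarrow> xs \<noteq> [] \<Longrightarrow> length os = length xs + 1 \<Longrightarrow>
        length ds = length xs \<Longrightarrow>
        (\<forall>i<length xs. ds ! i < 2 \<and> xs ! i \<in> morh C (os ! i) (os ! Suc i) (ds ! i))
        \<Longrightarrow> (\<Sum>d<length xs. \<Sum>k\<in>{1..length xs - d}.
               scl C ((-1::'k) ^ (d + sum_list (take d ds)))
                 (mu C (take (Suc d) os @ drop (d + k) os)
                    (take d xs @ [mu C (take (Suc k) (drop d os)) (take k (drop d xs))]
                       @ drop (d + k) xs))) = 0"
  using APc(8) by blast

lemma M: "module (scl C)" using vs by (simp add: vector_space_def module_def)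
lemma scl1: "scl C 1 x = x" by (rule module.scale_one[OF M])
lemma sclm1: "scl C (-1) x = - x" by (simp add: module.scale_minus_left[OF M] scl1)

lemma ainf2:
  assumes "trans C [A0,A1,A2]" "a1 \<in> morh C A0 A1 d1" "a2 \<in> morh C A1 A2 d2" "d1 < 2" "d2 < 2"
  shows "mu C [A0,A1,A2] [mu C [A0,A1] [a1], a2] + mu C [A0,A2] [mu C [A0,A1,A2] [a1,a2]]
     + scl C ((-1) ^ (1 + d1)) (mu C [A0,A1,A2] [a1, mu C [A1,A2] [a2]]) = 0"
proof -
  have H: "\<forall>i<length [a1,a2]. [d1,d2] ! i < 2 \<and> [a1,a2] ! i \<in> morh C ([A0,A1,A2] ! i) ([A0,A1,A2] ! Suc i) ([d1,d2] ! i)"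
    using assms by (simp add: all_lt2)
  have S: "(\<Sum>d<length [a1,a2]. \<Sum>k\<in>{1..length [a1,a2] - d}.
               scl C ((-1::'k) ^ (d + sum_list (take d [d1,d2])))
                 (mu C (take (Suc d) [A0,A1,A2] @ drop (d + k) [A0,A1,A2])
                    (take d [a1,a2] @ [mu C (take (Suc k) (drop d [A0,A1,A2])) (take k (drop d [a1,a2]))]
                       @ drop (d + k) [a1,a2]))) = 0"
    by (rule ax_ainf[OF assms(1) _ _ _ H]) auto
  have *: "{..<length [a1,a2]} = {0,1}" by auto
  have **: "{1..length [a1,a2] - 0} = {1,2}" "{1..length [a1,a2] - 1} = {1}" by auto
  from S show ?thesis unfolding * by (simp add: ** scl1 numeral_2_eq_2 algebra_simps)
qed


lemma addhom_diff:
  fixes f :: "'m \<Rightarrow> 'm"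
  assumes "\<And>x y. x \<in> S \<Longrightarrow> y \<in> S \<Longrightarrow> f (x + y) = f x + f y"
    and "\<And>x y. x \<in> S \<Longrightarrow> y \<in> S \<Longrightarrow> x - y \<in> S" "x \<in> S" "y \<in> S"
  shows "f (x - y) = f x - f y"
proof -
  have "f x = f ((x - y) + y)" by simp
  also have "\<dots> = f (x - y) + f y" using assms(1)[of "x - y" y] assms(2-4) by simp
  finally show ?thesis by (simp add: eq_diff_eq)
qed

end

context AP begin
lemma morh_0: "trans C [A,B] \<Longrightarrow> d < 2 \<Longrightarrow> 0 \<in> morh C A B d"
  by (rule module.subspace_0[OF M morh_sub])
lemma morh_add: "trans C [A,B] \<Longrightarrow> d < 2 \<Longrightarrow> x \<in> morh C A B d \<Longrightarrow> y \<in> morh C A B d \<Longrightarrow> x + y \<in> morh C A B d"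
  by (rule module.subspace_add[OF M morh_sub]) assumption+
lemma morh_diff: "trans C [A,B] \<Longrightarrow> d < 2 \<Longrightarrow> x \<in> morh C A B d \<Longrightarrow> y \<in> morh C A B d \<Longrightarrow> x - y \<in> morh C A B d"
  by (rule module.subspace_diff[OF M morh_sub]) assumption+
lemma morh_neg: "trans C [A,B] \<Longrightarrow> d < 2 \<Longrightarrow> x \<in> morh C A B d \<Longrightarrow> - x \<in> morh C A B d"
  by (rule module.subspace_neg[OF M morh_sub]) assumption+

lemma mor_I: "x0 \<in> morh C A B 0 \<Longrightarrow> x1 \<in> morh C A B 1 \<Longrightarrow> x0 + x1 \<in> mor C A B"
  unfolding mor_def by blast

lemma mor_E: "x \<in> mor C A B \<Longrightarrow> (\<And>x0 x1. x0 \<in> morh C A B 0 \<Longrightarrow> x1 \<in> morh C A B 1 \<Longrightarrow> x = x0 + x1 \<Longrightarrow> P) \<Longrightarrow> P"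
  unfolding mor_def by (elim CollectE exE conjE) 

lemma morh_mor: "trans C [A,B] \<Longrightarrow> d < 2 \<Longrightarrow> x \<in> morh C A B d \<Longrightarrow> x \<in> mor C A B"
proof -
  assume t: "trans C [A,B]" and d: "d < 2" and x: "x \<in> morh C A B d"
  have z0: "0 \<in> morh C A B 0" and z1: "0 \<in> morh C A B 1" using morh_0[OF t] by simp_all
  show ?thesis
  proof (cases "d = 0")
    case True
    then have "x + 0 \<in> mor C A B" using x z1 mor_I[of x A B 0] by simp
    then show ?thesis by simp
  next
    case False
    then have "d = 1" using d by simp
    then have "0 + x \<in> mor C A B" using x z0 mor_I[of 0 A B x] by simp
    then show ?thesis by simp
  qed
qed

lemma mor_0: "trans C [A,B] \<Longrightarrow> 0 \<in> mor C A B"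
  using morh_mor[of A B 0 0] morh_0[of A B 0] by simp

lemma mor_add: "trans C [A,B] \<Longrightarrow> x \<in> mor C A B \<Longrightarrow> y \<in> mor C A B \<Longrightarrow> x + y \<in> mor C A B"
proof -
  assume t: "trans C [A,B]" and xm: "x \<in> mor C A B" and ym: "y \<in> mor C A B"
  obtain x0 x1 where "x0 \<in> morh C A B 0" "x1 \<in> morh C A B 1" "x = x0 + x1"
    by (rule mor_E[OF xm])
  moreover obtain y0 y1 where "y0 \<in> morh C A B 0" "y1 \<in> morh C A B 1" "y = y0 + y1"
    by (rule mor_E[OF ym])
  ultimately have h: "x0 \<in> morh C A B 0" "x1 \<in> morh C A B 1" "x = x0 + x1"
     "y0 \<in> morh C A B 0" "y1 \<in> morh C A B 1" "y = y0 + y1" by blast+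
  have e: "x + y = (x0 + y0) + (x1 + y1)" using h by (simp add: algebra_simps)
  have "x0 + y0 \<in> morh C A B 0" "x1 + y1 \<in> morh C A B 1" using h morh_add[OF t, of 0 x0 y0] morh_add[OF t, of 1 x1 y1] by simp_all
  then show ?thesis unfolding e by (rule mor_I)
qed

lemma mor_neg: "trans C [A,B] \<Longrightarrow> x \<in> mor C A B \<Longrightarrow> - x \<in> mor C A B"
proof -
  assume t: "trans C [A,B]" and xm: "x \<in> mor C A B"
  obtain x0 x1 where h: "x0 \<in> morh C A B 0" "x1 \<in> morh C A B 1" "x = x0 + x1"
     by (rule mor_E[OF xm])
  have e: "- x = (- x0) + (- x1)" using h by (simp add: algebra_simps)
  have "- x0 \<in> morh C A B 0" "- x1 \<in> morh C A B 1" using h morh_neg[OF t, of 0 x0] morh_neg[OF t, of 1 x1] by simp_all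
  then show ?thesis unfolding e by (rule mor_I)
qed

lemma mor_diff: "trans C [A,B] \<Longrightarrow> x \<in> mor C A B \<Longrightarrow> y \<in> mor C A B \<Longrightarrow> x - y \<in> mor C A B"
proof -
  assume t: "trans C [A,B]" and xm: "x \<in> mor C A B" and ym: "y \<in> mor C A B"
  have "x + (- y) \<in> mor C A B" by (rule mor_add[OF t xm mor_neg[OF t ym]])
  then show ?thesis by simp
qed

lemma mor_induct:
  assumes "trans C [A,B]" "x \<in> mor C A B"
    and "\<And>x d. d < 2 \<Longrightarrow> x \<in> morh C A B d \<Longrightarrow> P x"
    and "\<And>x y. x \<in> mor C A B \<Longrightarrow> y \<in> mor C A B \<Longrightarrow> P x \<Longrightarrow> P y \<Longrightarrow> P (x + y)"
  shows "P x"
proof -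
  obtain x0 x1 where h: "x0 \<in> morh C A B 0" "x1 \<in> morh C A B 1" "x = x0 + x1"
    by (rule mor_E[OF assms(2)])
  have "P x0" "P x1" using assms(3)[of 0 x0] assms(3)[of 1 x1] h by simp_all
  moreover have "x0 \<in> mor C A B" "x1 \<in> mor C A B" using morh_mor[OF assms(1), of 0 x0] morh_mor[OF assms(1), of 1 x1] h by simp_all
  ultimately have "P (x0 + x1)" using assms(4)[of x0 x1] by blast
  then show ?thesis using h(3) by simp
qed

end

context AP begin
lemma sq: "subseq [A,B] [A,B,D]" "subseq [B,D] [A,B,D]" "subseq [A,D] [A,B,D]"
  "subseq [A,B,D] [A,B,D,E]" "subseq [A,B,E] [A,B,D,E]" "subseq [A,D,E] [A,B,D,E]" "subseq [B,D,E] [A,B,D,E]"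
  by (rule subseq_Cons2 | rule list_emb_Cons | rule list_emb_Nil)+

lemma tr2: assumes "trans C [A,B,D]" shows "trans C [A,B]" "trans C [B,D]" "trans C [A,D]"
  using trans_sub[OF assms sq(1)] trans_sub[OF assms sq(2)] trans_sub[OF assms sq(3)] by simp_all

lemma tr3: assumes "trans C [A,B,D,E]" shows "trans C [A,B,D]" "trans C [A,B,E]" "trans C [A,D,E]" "trans C [B,D,E]"
  using trans_sub[OF assms sq(4)] trans_sub[OF assms sq(5)] trans_sub[OF assms sq(6)] trans_sub[OF assms sq(7)] by simp_all

lemma m1_mor: "trans C [A,B] \<Longrightarrow> x \<in> mor C A B \<Longrightarrow> mu C [A,B] [x] \<in> mor C A B"
  using ax_closed[of "[A,B]" "[x]"] by simp

lemma m2_mor: "trans C [A,B,D] \<Longrightarrow> x \<in> mor C A B \<Longrightarrow> y \<in> mor C B D \<Longrightarrow> mu C [A,B,D] [x,y] \<in> mor C A D"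
  using ax_closed[of "[A,B,D]" "[x,y]"] by (simp add: all_lt2)

lemma m3_mor: "trans C [A,B,D,E] \<Longrightarrow> x \<in> mor C A B \<Longrightarrow> y \<in> mor C B D \<Longrightarrow> z \<in> mor C D E \<Longrightarrow>
   mu C [A,B,D,E] [x,y,z] \<in> mor C A E"
  using ax_closed[of "[A,B,D,E]" "[x,y,z]"] by (simp add: all_lt3)

lemma m1_deg: "trans C [A,B] \<Longrightarrow> d < 2 \<Longrightarrow> x \<in> morh C A B d \<Longrightarrow> mu C [A,B] [x] \<in> morh C A B ((Suc d) mod 2)"
  using ax_deg[of "[A,B]" "[x]" "[d]"] by simp

lemma m2_deg: "trans C [A,B,D] \<Longrightarrow> d < 2 \<Longrightarrow> e < 2 \<Longrightarrow> x \<in> morh C A B d \<Longrightarrow> y \<in> morh C B D e \<Longrightarrow>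
   mu C [A,B,D] [x,y] \<in> morh C A D ((d + e) mod 2)"
  using ax_deg[of "[A,B,D]" "[x,y]" "[d,e]"] by (simp add: all_lt2)

lemma m1_add: "trans C [A,B] \<Longrightarrow> x \<in> mor C A B \<Longrightarrow> y \<in> mor C A B \<Longrightarrow>
   mu C [A,B] [x + y] = mu C [A,B] [x] + mu C [A,B] [y]"
  using ax_lin[of "[A,B]" "[x]" 0 x y] by simp

lemma m2_add1: "trans C [A,B,D] \<Longrightarrow> x \<in> mor C A B \<Longrightarrow> x' \<in> mor C A B \<Longrightarrow> y \<in> mor C B D \<Longrightarrow>
   mu C [A,B,D] [x + x', y] = mu C [A,B,D] [x, y] + mu C [A,B,D] [x', y]"
  using ax_lin[of "[A,B,D]" "[x,y]" 0 x x'] by (simp add: all_lt2)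

lemma m2_add2: "trans C [A,B,D] \<Longrightarrow> x \<in> mor C A B \<Longrightarrow> y \<in> mor C B D \<Longrightarrow> y' \<in> mor C B D \<Longrightarrow>
   mu C [A,B,D] [x, y + y'] = mu C [A,B,D] [x, y] + mu C [A,B,D] [x, y']"
  using ax_lin[of "[A,B,D]" "[x,y]" 1 y y'] by (simp add: all_lt2)

lemma m3_add1: "trans C [A,B,D,E] \<Longrightarrow> x \<in> mor C A B \<Longrightarrow> x' \<in> mor C A B \<Longrightarrow> y \<in> mor C B D \<Longrightarrow> z \<in> mor C D E \<Longrightarrow>
   mu C [A,B,D,E] [x + x', y, z] = mu C [A,B,D,E] [x, y, z] + mu C [A,B,D,E] [x', y, z]"
  using ax_lin[of "[A,B,D,E]" "[x,y,z]" 0 x x'] by (simp add: all_lt3)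

lemma m3_add2: "trans C [A,B,D,E] \<Longrightarrow> x \<in> mor C A B \<Longrightarrow> y \<in> mor C B D \<Longrightarrow> y' \<in> mor C B D \<Longrightarrow> z \<in> mor C D E \<Longrightarrow>
   mu C [A,B,D,E] [x, y + y', z] = mu C [A,B,D,E] [x, y, z] + mu C [A,B,D,E] [x, y', z]"
  using ax_lin[of "[A,B,D,E]" "[x,y,z]" 1 y y'] by (simp add: all_lt3)

lemma m3_add3: "trans C [A,B,D,E] \<Longrightarrow> x \<in> mor C A B \<Longrightarrow> y \<in> mor C B D \<Longrightarrow> z \<in> mor C D E \<Longrightarrow> z' \<in> mor C D E \<Longrightarrow>
   mu C [A,B,D,E] [x, y, z + z'] = mu C [A,B,D,E] [x, y, z] + mu C [A,B,D,E] [x, y, z']"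
  using ax_lin[of "[A,B,D,E]" "[x,y,z]" 2 z z'] by (simp add: all_lt3 numeral_2_eq_2)

lemma m1_diff: "trans C [A,B] \<Longrightarrow> x \<in> mor C A B \<Longrightarrow> y \<in> mor C A B \<Longrightarrow>
   mu C [A,B] [x - y] = mu C [A,B] [x] - mu C [A,B] [y]"
  by (rule addhom_diff[where S="mor C A B" and f="\<lambda>x. mu C [A,B] [x]"]) (simp_all add: m1_add mor_diff)

lemma m2_diff1: "trans C [A,B,D] \<Longrightarrow> x \<in> mor C A B \<Longrightarrow> x' \<in> mor C A B \<Longrightarrow> y \<in> mor C B D \<Longrightarrow>
   mu C [A,B,D] [x - x', y] = mu C [A,B,D] [x, y] - mu C [A,B,D] [x', y]"
  by (rule addhom_diff[where S="mor C A B" and f="\<lambda>x. mu C [A,B,D] [x,y]"])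
     (simp_all add: m2_add1 mor_diff tr2)


lemma m2_diff2: "trans C [A,B,D] \<Longrightarrow> x \<in> mor C A B \<Longrightarrow> y \<in> mor C B D \<Longrightarrow> y' \<in> mor C B D \<Longrightarrow>
   mu C [A,B,D] [x, y - y'] = mu C [A,B,D] [x, y] - mu C [A,B,D] [x, y']"
  by (rule addhom_diff[where S="mor C B D" and f="\<lambda>y. mu C [A,B,D] [x,y]"])
     (simp_all add: m2_add2 mor_diff tr2)

end

context AP begin
lemma m1_0: "trans C [A,B] \<Longrightarrow> mu C [A,B] [0] = 0"
  using m1_diff[of A B 0 0] mor_0 by simp
lemma m2_0l: "trans C [A,B,D] \<Longrightarrow> y \<in> mor C B D \<Longrightarrow> mu C [A,B,D] [0, y] = 0"
  using m2_diff1[of A B D 0 0 y] mor_0[OF tr2(1)] by simp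
lemma m2_0r: "trans C [A,B,D] \<Longrightarrow> x \<in> mor C A B \<Longrightarrow> mu C [A,B,D] [x, 0] = 0"
  using m2_diff2[of A B D x 0 0] mor_0[OF tr2(2)] by simp

lemma m3_0_1: "trans C [A,B,D,E] \<Longrightarrow> y \<in> mor C B D \<Longrightarrow> z \<in> mor C D E \<Longrightarrow> mu C [A,B,D,E] [0, y, z] = 0"
  using m3_add1[of A B D E 0 0 y z] mor_0[OF tr2(1)[OF tr3(1)]] by simp
lemma m3_0_2: "trans C [A,B,D,E] \<Longrightarrow> x \<in> mor C A B \<Longrightarrow> z \<in> mor C D E \<Longrightarrow> mu C [A,B,D,E] [x, 0, z] = 0"
  using m3_add2[of A B D E x 0 0 z] mor_0[OF tr2(2)[OF tr3(1)]] by simp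
lemma m3_0_3: "trans C [A,B,D,E] \<Longrightarrow> x \<in> mor C A B \<Longrightarrow> y \<in> mor C B D \<Longrightarrow> mu C [A,B,D,E] [x, y, 0] = 0"
  using m3_add3[of A B D E x y 0 0] mor_0[OF tr2(2)[OF tr3(3)]] by simp

lemma ainf1:
  assumes "trans C [A0,A1]" "a1 \<in> morh C A0 A1 d1" "d1 < 2"
  shows "mu C [A0,A1] [mu C [A0,A1] [a1]] = 0"
  using ax_ainf[of "[A0,A1]" "[a1]" "[d1]"] assms by (simp add: scl1)

lemma ainf3:
  assumes "trans C [A0,A1,A2,A3]" "a1 \<in> morh C A0 A1 d1" "a2 \<in> morh C A1 A2 d2" "a3 \<in> morh C A2 A3 d3"
     "d1 < 2" "d2 < 2" "d3 < 2"
  shows "mu C [A0,A1,A2,A3] [mu C [A0,A1] [a1], a2, a3] + mu C [A0,A2,A3] [mu C [A0,A1,A2] [a1,a2], a3]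
     + mu C [A0,A3] [mu C [A0,A1,A2,A3] [a1,a2,a3]]
     + scl C ((-1) ^ (1 + d1)) (mu C [A0,A1,A2,A3] [a1, mu C [A1,A2] [a2], a3])
     + scl C ((-1) ^ (1 + d1)) (mu C [A0,A1,A3] [a1, mu C [A1,A2,A3] [a2,a3]])
     + scl C ((-1) ^ (2 + d1 + d2)) (mu C [A0,A1,A2,A3] [a1, a2, mu C [A2,A3] [a3]]) = 0"
proof -
  have H: "\<forall>i<length [a1,a2,a3]. [d1,d2,d3] ! i < 2 \<and> [a1,a2,a3] ! i \<in> morh C ([A0,A1,A2,A3] ! i) ([A0,A1,A2,A3] ! Suc i) ([d1,d2,d3] ! i)"
    using assms by (simp add: all_lt3)
  have S: "(\<Sum>d<length [a1,a2,a3]. \<Sum>k\<in>{1..length [a1,a2,a3] - d}.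
               scl C ((-1::'k) ^ (d + sum_list (take d [d1,d2,d3])))
                 (mu C (take (Suc d) [A0,A1,A2,A3] @ drop (d + k) [A0,A1,A2,A3])
                    (take d [a1,a2,a3] @ [mu C (take (Suc k) (drop d [A0,A1,A2,A3])) (take k (drop d [a1,a2,a3]))]
                       @ drop (d + k) [a1,a2,a3]))) = 0"
    by (rule ax_ainf[OF assms(1) _ _ _ H]) auto
  have *: "{..<length [a1,a2,a3]} = {0,1,2}" by auto
  have **: "{1..length [a1,a2,a3] - 0} = {1,2,3}" "{1..length [a1,a2,a3] - 1} = {1,2}"
     "{1..length [a1,a2,a3] - 2} = {1}" by auto
  from S show ?thesis unfolding * by (simp add: ** scl1 numeral_2_eq_2 numeral_3_eq_3 algebra_simps)
qed

end

context AP begin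

abbreviation "m1 A B x \<equiv> mu C [A,B] [x]"
abbreviation "m2 A B D x y \<equiv> mu C [A,B,D] [x,y]"
abbreviation "m3 A B D E x y z \<equiv> mu C [A,B,D,E] [x,y,z]"

lemmas mor_ind = mor_induct[consumes 2, case_names hom add]

lemma cyc_iff: "x \<in> cycles C A B \<longleftrightarrow> x \<in> mor C A B \<and> m1 A B x = 0"
  unfolding cycles_def by simp

lemma bd_iff: "b \<in> bounds C A B \<longleftrightarrow> (\<exists>y\<in>mor C A B. b = m1 A B y)"
  unfolding bounds_def by blast

lemma bdI: "y \<in> mor C A B \<Longrightarrow> m1 A B y \<in> bounds C A B"
  unfolding bounds_def by blast

lemma scl_0: "scl C c 0 = 0" by (rule module.scale_zero_right[OF M])

lemma m1m1: assumes t: "trans C [A,B]" and x: "x \<in> mor C A B" shows "m1 A B (m1 A B x) = 0"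
  using t x
proof (induction rule: mor_ind)
  case (hom x d) then show ?case using ainf1[OF t] by blast
next
  case (add x y)
  have "m1 A B (m1 A B (x + y)) = m1 A B (m1 A B x + m1 A B y)" using add m1_add[OF t] by simp
  also have "\<dots> = m1 A B (m1 A B x) + m1 A B (m1 A B y)" using add m1_add[OF t] m1_mor[OF t] by simp
  finally show ?case using add by simp
qed

lemma cyc_mor: "x \<in> cycles C A B \<Longrightarrow> x \<in> mor C A B" by (simp add: cyc_iff)
lemma cyc_0: "trans C [A,B] \<Longrightarrow> 0 \<in> cycles C A B" by (simp add: cyc_iff mor_0 m1_0)
lemma cyc_add: "trans C [A,B] \<Longrightarrow> x \<in> cycles C A B \<Longrightarrow> y \<in> cycles C A B \<Longrightarrow> x + y \<in> cycles C A B"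
  by (simp add: cyc_iff mor_add m1_add)
lemma cyc_diff: "trans C [A,B] \<Longrightarrow> x \<in> cycles C A B \<Longrightarrow> y \<in> cycles C A B \<Longrightarrow> x - y \<in> cycles C A B"
  by (simp add: cyc_iff mor_diff m1_diff)
lemma cyc_neg: "trans C [A,B] \<Longrightarrow> x \<in> cycles C A B \<Longrightarrow> - x \<in> cycles C A B"
  using cyc_diff[of A B 0 x] cyc_0[of A B] by simp

lemma bd_0: "trans C [A,B] \<Longrightarrow> 0 \<in> bounds C A B" using bdI[of 0 A B] mor_0 m1_0 by simp
lemma bd_add: assumes t: "trans C [A,B]" and b1: "x \<in> bounds C A B" and b2: "y \<in> bounds C A B"
  shows "x + y \<in> bounds C A B"
proof -
  obtain u where u: "u \<in> mor C A B" "x = m1 A B u" using b1 unfolding bd_iff by blast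
  obtain v where v: "v \<in> mor C A B" "y = m1 A B v" using b2 unfolding bd_iff by blast
  have "x + y = m1 A B (u + v)" using u v m1_add[OF t u(1) v(1)] by simp
  then show ?thesis using bdI[OF mor_add[OF t u(1) v(1)]] by simp
qed
lemma bd_diff: assumes t: "trans C [A,B]" and b1: "x \<in> bounds C A B" and b2: "y \<in> bounds C A B"
  shows "x - y \<in> bounds C A B"
proof -
  obtain u where u: "u \<in> mor C A B" "x = m1 A B u" using b1 unfolding bd_iff by blast
  obtain v where v: "v \<in> mor C A B" "y = m1 A B v" using b2 unfolding bd_iff by blast
  have "x - y = m1 A B (u - v)" using u v m1_diff[OF t u(1) v(1)] by simp
  then show ?thesis using bdI[OF mor_diff[OF t u(1) v(1)]] by simp
qed
lemma bd_neg: "trans C [A,B] \<Longrightarrow> x \<in> bounds C A B \<Longrightarrow> - x \<in> bounds C A B"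
  using bd_diff[of A B 0 x] bd_0[of A B] by simp
lemma bd_cyc: assumes t: "trans C [A,B]" and b: "x \<in> bounds C A B" shows "x \<in> cycles C A B"
proof -
  obtain u where u: "u \<in> mor C A B" "x = m1 A B u" using b unfolding bd_iff by blast
  then show ?thesis unfolding cyc_iff using m1m1[OF t u(1)] m1_mor[OF t u(1)] by simp
qed

lemma cyc_hom:
  assumes t: "trans C [A,B]" and x: "x \<in> cycles C A B"
  obtains x0 x1 where "x0 \<in> morh C A B 0" "x1 \<in> morh C A B 1" "x = x0 + x1"
    "x0 \<in> cycles C A B" "x1 \<in> cycles C A B"
proof -
  obtain x0 x1 where h: "x0 \<in> morh C A B 0" "x1 \<in> morh C A B 1" "x = x0 + x1"
    by (rule mor_E[OF cyc_mor[OF x]])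
  have a: "m1 A B x0 \<in> morh C A B 1" using m1_deg[OF t _ h(1)] by simp
  have b: "m1 A B x1 \<in> morh C A B 0" using m1_deg[OF t _ h(2)] by simp
  have m0: "x0 \<in> mor C A B" "x1 \<in> mor C A B" using morh_mor[OF t, of 0 x0] morh_mor[OF t, of 1 x1] h by simp_all
  have "m1 A B x0 + m1 A B x1 = 0" using x h m1_add[OF t m0] by (simp add: cyc_iff)
  then have "m1 A B x0 = - m1 A B x1" by (simp add: eq_neg_iff_add_eq_0)
  then have "m1 A B x0 \<in> morh C A B 0" using morh_neg[OF t _ b] by simp
  then have z0: "m1 A B x0 = 0" using a morh_int[OF t] by blast
  then have z1: "m1 A B x1 = 0" using \<open>m1 A B x0 + m1 A B x1 = 0\<close> by simp
  show ?thesis using that[OF h] m0 z0 z1 by (simp add: cyc_iff)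
qed

lemma cyc_induct[consumes 2, case_names hom add]:
  assumes t: "trans C [A,B]" and x: "x \<in> cycles C A B"
    and hom: "\<And>x d. d < 2 \<Longrightarrow> x \<in> morh C A B d \<Longrightarrow> x \<in> cycles C A B \<Longrightarrow> P x"
    and add: "\<And>x y. x \<in> cycles C A B \<Longrightarrow> y \<in> cycles C A B \<Longrightarrow> P x \<Longrightarrow> P y \<Longrightarrow> P (x + y)"
  shows "P x"
proof -
  obtain x0 x1 where h: "x0 \<in> morh C A B 0" "x1 \<in> morh C A B 1" "x = x0 + x1"
    "x0 \<in> cycles C A B" "x1 \<in> cycles C A B" by (rule cyc_hom[OF t x])
  have "P x0" "P x1" using hom[of 0 x0] hom[of 1 x1] h by simp_all
  then have "P (x0 + x1)" using add h by blast
  then show ?thesis using h by simp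
qed

end

context AP begin
text \<open>Leibniz rule consequences\<close>

lemma m2_cyc:
  assumes t: "trans C [A,B,D]" and a: "a \<in> cycles C A B" and c: "c \<in> cycles C B D"
  shows "m2 A B D a c \<in> cycles C A D"
proof -
  have tAB: "trans C [A,B]" and tBD: "trans C [B,D]" and tAD: "trans C [A,D]" using tr2[OF t] by auto
  show ?thesis using tAB a
  proof (induction rule: cyc_induct)
    case (hom a d)
    show ?case using tBD \<open>c \<in> cycles C B D\<close>
    proof (induction rule: cyc_induct)
      case (hom c e)
      have "m2 A B D (m1 A B a) c + m1 A D (m2 A B D a c) + scl C ((-1) ^ (1 + d)) (m2 A B D a (m1 B D c)) = 0"
        by (rule ainf2[OF t]) fact+
      then have "m1 A D (m2 A B D a c) = 0"
        using hom \<open>a \<in> cycles C A B\<close> m2_0l[OF t] m2_0r[OF t] by (simp add: cyc_iff scl_0)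
      then show ?case using m2_mor[OF t] hom \<open>a \<in> cycles C A B\<close> by (simp add: cyc_iff)
    next
      case (add c c')
      have "m2 A B D a (c + c') = m2 A B D a c + m2 A B D a c'"
        by (rule m2_add2[OF t cyc_mor cyc_mor cyc_mor]) fact+
      then show ?case using add cyc_add[OF tAD] by simp
    qed
  next
    case (add a a')
    have "m2 A B D (a + a') c = m2 A B D a c + m2 A B D a' c"
      by (rule m2_add1[OF t cyc_mor cyc_mor cyc_mor]) fact+
    then show ?case using add cyc_add[OF tAD] by simp
  qed

qed

lemma m2_bdr:
  assumes t: "trans C [A,B,D]" and a: "a \<in> cycles C A B" and y: "y \<in> mor C B D"
  shows "m2 A B D a (m1 B D y) \<in> bounds C A D"
proof -
  have tAB: "trans C [A,B]" and tBD: "trans C [B,D]" and tAD: "trans C [A,D]" using tr2[OF t] by auto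
  show ?thesis using tAB a
  proof (induction rule: cyc_induct)
    case (hom a d)
    show ?case using tBD \<open>y \<in> mor C B D\<close>
    proof (induction rule: mor_ind)
      case (hom y e)
      have ym: "y \<in> mor C B D" using morh_mor[OF tBD hom(1,2)] .
      have am: "a \<in> mor C A B" using \<open>a \<in> cycles C A B\<close> by (simp add: cyc_iff)
      have "m2 A B D (m1 A B a) y + m1 A D (m2 A B D a y) + scl C ((-1) ^ (1 + d)) (m2 A B D a (m1 B D y)) = 0"
        by (rule ainf2[OF t]) fact+
      then have e: "m1 A D (m2 A B D a y) + scl C ((-1) ^ (1 + d)) (m2 A B D a (m1 B D y)) = 0"
        using \<open>a \<in> cycles C A B\<close> m2_0l[OF t ym] by (simp add: cyc_iff)
      have b: "m1 A D (m2 A B D a y) \<in> bounds C A D" by (rule bdI[OF m2_mor[OF t am ym]])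
      show ?case
      proof (cases "d = 0")
        case True
        then have "m2 A B D a (m1 B D y) = m1 A D (m2 A B D a y)" using e by (simp add: sclm1)
        then show ?thesis using b by simp
      next
        case False
        then have "d = 1" using \<open>d < 2\<close> by simp
        then have "m2 A B D a (m1 B D y) = - m1 A D (m2 A B D a y)" using e
          by (simp add: scl1 add_eq_0_iff)
        then show ?thesis using bd_neg[OF tAD b] by simp
      qed
    next
      case (add y y')
      have am: "a \<in> mor C A B" using \<open>a \<in> cycles C A B\<close> by (simp add: cyc_iff)
      have "m2 A B D a (m1 B D (y + y')) = m2 A B D a (m1 B D y + m1 B D y')"
        using m1_add[OF tBD add(1,2)] by simp
      also have "\<dots> = m2 A B D a (m1 B D y) + m2 A B D a (m1 B D y')"
        by (rule m2_add2[OF t am m1_mor[OF tBD add(1)] m1_mor[OF tBD add(2)]])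
      finally have "m2 A B D a (m1 B D (y + y')) = m2 A B D a (m1 B D y) + m2 A B D a (m1 B D y')" .
      then show ?case using add bd_add[OF tAD] by simp
    qed
  next
    case (add a a')
    have "m2 A B D (a + a') (m1 B D y) = m2 A B D a (m1 B D y) + m2 A B D a' (m1 B D y)"
      by (rule m2_add1[OF t cyc_mor cyc_mor m1_mor[OF tBD y]]) fact+
    then show ?case using add bd_add[OF tAD] by simp
  qed

qed

lemma m2_bdl:
  assumes t: "trans C [A,B,D]" and y: "y \<in> mor C A B" and c: "c \<in> cycles C B D"
  shows "m2 A B D (m1 A B y) c \<in> bounds C A D"
proof -
  have tAB: "trans C [A,B]" and tBD: "trans C [B,D]" and tAD: "trans C [A,D]" using tr2[OF t] by auto
  show ?thesis using tBD c
  proof (induction rule: cyc_induct)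
    case (hom c e)
    show ?case using tAB \<open>y \<in> mor C A B\<close>
    proof (induction rule: mor_ind)
      case (hom y d)
      have ym: "y \<in> mor C A B" using morh_mor[OF tAB hom(1,2)] .
      have cm: "c \<in> mor C B D" using \<open>c \<in> cycles C B D\<close> by (simp add: cyc_iff)
      have "m2 A B D (m1 A B y) c + m1 A D (m2 A B D y c) + scl C ((-1) ^ (1 + d)) (m2 A B D y (m1 B D c)) = 0"
        by (rule ainf2[OF t]) fact+
      then have e: "m2 A B D (m1 A B y) c + m1 A D (m2 A B D y c) = 0"
        using \<open>c \<in> cycles C B D\<close> m2_0r[OF t ym] by (simp add: cyc_iff scl_0)
      have b: "m1 A D (m2 A B D y c) \<in> bounds C A D" by (rule bdI[OF m2_mor[OF t ym cm]])
      have "m2 A B D (m1 A B y) c = - m1 A D (m2 A B D y c)" using e by (simp add: eq_neg_iff_add_eq_0)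
      then show ?case using bd_neg[OF tAD b] by simp
    next
      case (add y y')
      have cm: "c \<in> mor C B D" using \<open>c \<in> cycles C B D\<close> by (simp add: cyc_iff)
      have "m2 A B D (m1 A B (y + y')) c = m2 A B D (m1 A B y + m1 A B y') c"
        using m1_add[OF tAB add(1,2)] by simp
      also have "\<dots> = m2 A B D (m1 A B y) c + m2 A B D (m1 A B y') c"
        by (rule m2_add1[OF t m1_mor[OF tAB add(1)] m1_mor[OF tAB add(2)] cm])
      finally have "m2 A B D (m1 A B (y + y')) c = m2 A B D (m1 A B y) c + m2 A B D (m1 A B y') c" .
      then show ?case using add bd_add[OF tAD] by simp
    qed
  next
    case (add c c')
    have "m2 A B D (m1 A B y) (c + c') = m2 A B D (m1 A B y) c + m2 A B D (m1 A B y) c'"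
      by (rule m2_add2[OF t m1_mor[OF tAB y] cyc_mor cyc_mor]) fact+
    then show ?case using add bd_add[OF tAD] by simp
  qed

qed

end

context AP begin

lemma m2_neg1: assumes t: "trans C [A,B,D]" and x: "x \<in> mor C A B" and y: "y \<in> mor C B D"
  shows "m2 A B D (- x) y = - m2 A B D x y"
proof -
  have "m2 A B D (0 - x) y = m2 A B D 0 y - m2 A B D x y"
    by (rule m2_diff1[OF t mor_0[OF tr2(1)[OF t]] x y])
  then show ?thesis using m2_0l[OF t y] by simp
qed

lemma m2_neg2: assumes t: "trans C [A,B,D]" and x: "x \<in> mor C A B" and y: "y \<in> mor C B D"
  shows "m2 A B D x (- y) = - m2 A B D x y"
proof -
  have "m2 A B D x (0 - y) = m2 A B D x 0 - m2 A B D x y"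
    by (rule m2_diff2[OF t x mor_0[OF tr2(2)[OF t]] y])
  then show ?thesis using m2_0r[OF t x] by simp
qed

definition sig :: "'o \<Rightarrow> 'o \<Rightarrow> 'm \<Rightarrow> 'm" where
  "sig A B x = fst (SOME p. fst p \<in> morh C A B 0 \<and> snd p \<in> morh C A B 1 \<and> x = fst p + snd p)
             - snd (SOME p. fst p \<in> morh C A B 0 \<and> snd p \<in> morh C A B 1 \<and> x = fst p + snd p)"

lemma decomp_unique:
  assumes t: "trans C [A,B]" and h: "a0 \<in> morh C A B 0" "b0 \<in> morh C A B 0" "a1 \<in> morh C A B 1" "b1 \<in> morh C A B 1"
    and e: "a0 + a1 = b0 + b1"
  shows "a0 = b0 \<and> a1 = b1"
proof -
  have "a0 - b0 = (a0 + a1) - (b0 + a1)" by (simp add: algebra_simps)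
  also have "\<dots> = (b0 + b1) - (b0 + a1)" by (simp only: e)
  also have "\<dots> = b1 - a1" by (simp add: algebra_simps)
  finally have "a0 - b0 = b1 - a1" .
  moreover have "a0 - b0 \<in> morh C A B 0" using morh_diff[OF t _ h(1,2)] by simp
  moreover have "b1 - a1 \<in> morh C A B 1" using morh_diff[OF t _ h(4,3)] by simp
  ultimately have "a0 - b0 \<in> morh C A B 0 \<inter> morh C A B 1" by simp
  then have "a0 - b0 = 0" using morh_int[OF t] by blast
  then show ?thesis using \<open>a0 - b0 = b1 - a1\<close> by simp
qed

lemma sig_eq: assumes t: "trans C [A,B]" and h: "x0 \<in> morh C A B 0" "x1 \<in> morh C A B 1"
  shows "sig A B (x0 + x1) = x0 - x1"
proof -
  define P where "P = (\<lambda>p. fst p \<in> morh C A B 0 \<and> snd p \<in> morh C A B 1 \<and> x0 + x1 = fst p + snd p)"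
  have "P (x0, x1)" unfolding P_def using h by simp
  then have "P (SOME p. P p)" by (rule someI)
  then have q: "fst (SOME p. P p) \<in> morh C A B 0" "snd (SOME p. P p) \<in> morh C A B 1"
    "x0 + x1 = fst (SOME p. P p) + snd (SOME p. P p)" unfolding P_def by simp_all
  have "x0 = fst (SOME p. P p) \<and> x1 = snd (SOME p. P p)"
    by (rule decomp_unique[OF t h(1) q(1) h(2) q(2) q(3)])
  then have "fst (SOME p. P p) = x0 \<and> snd (SOME p. P p) = x1" by simp
  then show ?thesis unfolding sig_def P_def[symmetric] by simp
qed

lemma sig_h0: "trans C [A,B] \<Longrightarrow> x \<in> morh C A B 0 \<Longrightarrow> sig A B x = x"
  using sig_eq[of A B x 0] morh_0[of A B 1] by simp
lemma sig_h1: "trans C [A,B] \<Longrightarrow> x \<in> morh C A B 1 \<Longrightarrow> sig A B x = - x"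
  using sig_eq[of A B 0 x] morh_0[of A B 0] by simp

lemma sig_hom: "trans C [A,B] \<Longrightarrow> d < 2 \<Longrightarrow> x \<in> morh C A B d \<Longrightarrow> sig A B x = (if d = 0 then x else - x)"
  using sig_h0[of A B x] sig_h1[of A B x] by (cases "d = 0") (simp_all add: less_2_cases_iff)

lemma sig_add: assumes t: "trans C [A,B]" and x: "x \<in> mor C A B" and y: "y \<in> mor C A B"
  shows "sig A B (x + y) = sig A B x + sig A B y"
proof -
  obtain x0 x1 where hx: "x0 \<in> morh C A B 0" "x1 \<in> morh C A B 1" "x = x0 + x1" by (rule mor_E[OF x])
  obtain y0 y1 where hy: "y0 \<in> morh C A B 0" "y1 \<in> morh C A B 1" "y = y0 + y1" by (rule mor_E[OF y])
  have e: "x + y = (x0 + y0) + (x1 + y1)" using hx hy by (simp add: algebra_simps)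
  have "sig A B (x + y) = (x0 + y0) - (x1 + y1)"
    unfolding e by (rule sig_eq[OF t morh_add[OF t _ hx(1) hy(1)] morh_add[OF t _ hx(2) hy(2)]]) simp_all
  also have "\<dots> = (x0 - x1) + (y0 - y1)" by (simp add: algebra_simps)
  also have "\<dots> = sig A B x + sig A B y" using sig_eq[OF t hx(1,2)] sig_eq[OF t hy(1,2)] hx(3) hy(3) by simp
  finally show ?thesis .
qed

lemma sig_mor: assumes t: "trans C [A,B]" and x: "x \<in> mor C A B" shows "sig A B x \<in> mor C A B"
proof -
  obtain x0 x1 where hx: "x0 \<in> morh C A B 0" "x1 \<in> morh C A B 1" "x = x0 + x1" by (rule mor_E[OF x])
  have "x0 + (- x1) \<in> mor C A B" by (rule mor_I[OF hx(1) morh_neg[OF t _ hx(2)]]) simp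
  then show ?thesis using sig_eq[OF t hx(1,2)] hx(3) by simp
qed

lemma sig_sig: assumes t: "trans C [A,B]" and x: "x \<in> mor C A B" shows "sig A B (sig A B x) = x"
proof -
  obtain x0 x1 where hx: "x0 \<in> morh C A B 0" "x1 \<in> morh C A B 1" "x = x0 + x1" by (rule mor_E[OF x])
  have n: "- x1 \<in> morh C A B 1" using morh_neg[OF t _ hx(2)] by simp
  have "sig A B x = x0 + (- x1)" using sig_eq[OF t hx(1,2)] hx(3) by simp
  then have "sig A B (sig A B x) = x0 - (- x1)" using sig_eq[OF t hx(1) n] by simp
  then show ?thesis using hx(3) by simp
qed

lemma sig_cyc: assumes t: "trans C [A,B]" and x: "x \<in> cycles C A B" shows "sig A B x \<in> cycles C A B"
  using t x
proof (induction rule: cyc_induct)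
  case (hom x d)
  then show ?case using sig_hom[OF t hom(1,2)] cyc_neg[OF t] by simp
next
  case (add x y)
  then show ?case using sig_add[OF t cyc_mor cyc_mor] cyc_add[OF t] by simp
qed

lemma sig_bd1: assumes t: "trans C [A,B]" and y: "y \<in> mor C A B" shows "sig A B (m1 A B y) \<in> bounds C A B"
  using t y
proof (induction rule: mor_ind)
  case (hom y d)
  have "m1 A B y \<in> morh C A B (Suc d mod 2)" by (rule m1_deg[OF t hom(1,2)])
  moreover have b: "m1 A B y \<in> bounds C A B" by (rule bdI[OF morh_mor[OF t hom(1,2)]])
  ultimately show ?case using sig_hom[OF t, of "Suc d mod 2" "m1 A B y"] bd_neg[OF t b] by simp
next
  case (add y y')
  have "sig A B (m1 A B (y + y')) = sig A B (m1 A B y + m1 A B y')" using m1_add[OF t add(1,2)] by simp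
  also have "\<dots> = sig A B (m1 A B y) + sig A B (m1 A B y')"
    by (rule sig_add[OF t m1_mor[OF t add(1)] m1_mor[OF t add(2)]])
  finally show ?case using bd_add[OF t add(3,4)] by simp
qed

lemma sig_bd: assumes t: "trans C [A,B]" and b: "x \<in> bounds C A B" shows "sig A B x \<in> bounds C A B"
proof -
  obtain u where u: "u \<in> mor C A B" "x = m1 A B u" using b unfolding bd_iff by blast
  then show ?thesis using sig_bd1[OF t u(1)] by simp
qed

end

context AP begin

lemma m2_sig:
  assumes t: "trans C [A,B,D]" and e: "e \<in> mor C A B" and y: "y \<in> mor C B D"
  shows "m2 A B D (sig A B e) y = sig A D (m2 A B D e (sig B D y))"
proof -
  have tAB: "trans C [A,B]" and tBD: "trans C [B,D]" and tAD: "trans C [A,D]" using tr2[OF t] by auto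
  show ?thesis using tAB e
  proof (induction rule: mor_ind)
    case (hom e d)
    have em: "e \<in> mor C A B" by (rule morh_mor[OF tAB hom(1,2)])
    show ?case using tBD y
    proof (induction rule: mor_ind)
      case (hom y f)
      have ym: "y \<in> mor C B D" by (rule morh_mor[OF tBD hom(1,2)])
      have se: "sig A B e = (if d = 0 then e else - e)" by (rule sig_hom[OF tAB]) fact+
      have sy: "sig B D y = (if f = 0 then y else - y)" by (rule sig_hom[OF tBD hom(1,2)])
      have g: "m2 A B D e y \<in> morh C A D ((d + f) mod 2)" by (rule m2_deg[OF t]) fact+
      have gn: "- m2 A B D e y \<in> morh C A D ((d + f) mod 2)" by (rule morh_neg[OF tAD _ g]) simp
      have sg: "sig A D (m2 A B D e y) = (if (d + f) mod 2 = 0 then m2 A B D e y else - m2 A B D e y)"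
        by (rule sig_hom[OF tAD _ g]) simp
      have sgn: "sig A D (- m2 A B D e y) = (if (d + f) mod 2 = 0 then - m2 A B D e y else m2 A B D e y)"
        using sig_hom[OF tAD _ gn] by simp
      have n1: "m2 A B D (- e) y = - m2 A B D e y" by (rule m2_neg1[OF t em ym])
      have n2: "m2 A B D e (- y) = - m2 A B D e y" by (rule m2_neg2[OF t em ym])
      have "d = 0 \<or> d = 1" using \<open>d < 2\<close> by auto
      moreover have "f = 0 \<or> f = 1" using hom(1) by auto
      ultimately show ?case
      proof (elim disjE)
        assume "d = 0" "f = 0" then show ?thesis using se sy sg by simp
      next
        assume "d = 0" "f = 1" then show ?thesis using se sy sgn n2 by simp
      next
        assume "d = 1" "f = 0" then show ?thesis using se sy sg n1 by simp
      next
        assume "d = 1" "f = 1" then show ?thesis using se sy sgn n1 n2 by simp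
      qed
    next
      case (add y y')
      have s1: "sig B D (y + y') = sig B D y + sig B D y'" by (rule sig_add[OF tBD add(1,2)])
      have sm: "sig A B e \<in> mor C A B" by (rule sig_mor[OF tAB em])
      have a1: "m2 A B D (sig A B e) (y + y') = m2 A B D (sig A B e) y + m2 A B D (sig A B e) y'"
        by (rule m2_add2[OF t sm add(1,2)])
      have a2: "m2 A B D e (sig B D y + sig B D y') = m2 A B D e (sig B D y) + m2 A B D e (sig B D y')"
        by (rule m2_add2[OF t em sig_mor[OF tBD add(1)] sig_mor[OF tBD add(2)]])
      have a3: "sig A D (m2 A B D e (sig B D y) + m2 A B D e (sig B D y')) =
          sig A D (m2 A B D e (sig B D y)) + sig A D (m2 A B D e (sig B D y'))"
        by (rule sig_add[OF tAD m2_mor[OF t em sig_mor[OF tBD add(1)]] m2_mor[OF t em sig_mor[OF tBD add(2)]]])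
      show ?case unfolding a1 s1 a2 a3 add(3,4) ..
    qed
  next
    case (add e e')
    have s1: "sig A B (e + e') = sig A B e + sig A B e'" by (rule sig_add[OF tAB add(1,2)])
    have sy: "sig B D y \<in> mor C B D" by (rule sig_mor[OF tBD y])
    have a1: "m2 A B D (sig A B e + sig A B e') y = m2 A B D (sig A B e) y + m2 A B D (sig A B e') y"
      by (rule m2_add1[OF t sig_mor[OF tAB add(1)] sig_mor[OF tAB add(2)] y])
    have a2: "m2 A B D (e + e') (sig B D y) = m2 A B D e (sig B D y) + m2 A B D e' (sig B D y)"
      by (rule m2_add1[OF t add(1,2) sy])
    have a3: "sig A D (m2 A B D e (sig B D y) + m2 A B D e' (sig B D y)) =
        sig A D (m2 A B D e (sig B D y)) + sig A D (m2 A B D e' (sig B D y))"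
      by (rule sig_add[OF tAD m2_mor[OF t add(1) sy] m2_mor[OF t add(2) sy]])
    show ?case unfolding s1 a1 a2 a3 add(3,4) ..
  qed
qed

lemma bd_split: "trans C [A,B] \<Longrightarrow> X1 - Y1 \<in> bounds C A B \<Longrightarrow> X2 - Y2 \<in> bounds C A B \<Longrightarrow>
   (X1 + X2) - (Y1 + Y2) \<in> bounds C A B"
proof -
  assume t: "trans C [A,B]" and "X1 - Y1 \<in> bounds C A B" "X2 - Y2 \<in> bounds C A B"
  then have "(X1 - Y1) + (X2 - Y2) \<in> bounds C A B" by (rule bd_add)
  moreover have "(X1 - Y1) + (X2 - Y2) = (X1 + X2) - (Y1 + Y2)" by (simp add: algebra_simps)
  ultimately show ?thesis by simp
qed

end

context AP begin

lemma assoc_hom: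
  assumes t: "trans C [A,B,D,E]"
    and h1: "a1 \<in> morh C A B d1" "d1 < 2" "a1 \<in> cycles C A B"
    and h2: "a2 \<in> morh C B D d2" "d2 < 2" "a2 \<in> cycles C B D"
    and h3: "a3 \<in> morh C D E d3" "d3 < 2" "a3 \<in> cycles C D E"
  shows "m2 A D E (m2 A B D a1 a2) a3 - m2 A B E (sig A B a1) (m2 B D E a2 a3) \<in> bounds C A E"
proof -
  have tABD: "trans C [A,B,D]" and tABE: "trans C [A,B,E]" and tADE: "trans C [A,D,E]" and tBDE: "trans C [B,D,E]"
    using tr3[OF t] by auto
  have tAB: "trans C [A,B]" and tAE: "trans C [A,E]" using tr2[OF tABD] tr2[OF tADE] by auto
  have m: "a1 \<in> mor C A B" "a2 \<in> mor C B D" "a3 \<in> mor C D E" using h1 h2 h3 by (simp_all add: cyc_iff)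
  have z: "m1 A B a1 = 0" "m1 B D a2 = 0" "m1 D E a3 = 0" using h1 h2 h3 by (simp_all add: cyc_iff)
  define X where "X = m2 A D E (m2 A B D a1 a2) a3"
  define Y where "Y = m2 A B E a1 (m2 B D E a2 a3)"
  define W where "W = mu C [A,B,D,E] [a1,a2,a3]"
  have Wm: "W \<in> mor C A E" unfolding W_def by (rule m3_mor[OF t m])
  have "mu C [A,B,D,E] [m1 A B a1, a2, a3] + X + m1 A E W
     + scl C ((-1) ^ (1 + d1)) (mu C [A,B,D,E] [a1, m1 B D a2, a3])
     + scl C ((-1) ^ (1 + d1)) Y
     + scl C ((-1) ^ (2 + d1 + d2)) (mu C [A,B,D,E] [a1, a2, m1 D E a3]) = 0"
    unfolding X_def Y_def W_def by (rule ainf3[OF t h1(1) h2(1) h3(1) h1(2) h2(2) h3(2)])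
  then have e: "X + m1 A E W + scl C ((-1) ^ (1 + d1)) Y = 0"
    unfolding z using m3_0_1[OF t m(2,3)] m3_0_2[OF t m(1,3)] m3_0_3[OF t m(1,2)] by (simp add: scl_0)
  have b: "- m1 A E W \<in> bounds C A E" by (rule bd_neg[OF tAE bdI[OF Wm]])
  have "d1 = 0 \<or> d1 = 1" using h1(2) by auto
  then show ?thesis
  proof
    assume d: "d1 = 0"
    have s: "sig A B a1 = a1" using sig_hom[OF tAB h1(2) h1(1)] d by simp
    have e': "X + m1 A E W + - Y = 0" using e d by (simp add: sclm1)
    have q: "X - Y + m1 A E W = X + m1 A E W + - Y" by (simp add: algebra_simps)
    have "X - Y + m1 A E W = 0" using q e' by (rule HOL.trans)
    then have "X - Y = - m1 A E W" by (simp add: eq_neg_iff_add_eq_0)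
    then show ?thesis using b s unfolding X_def Y_def by simp
  next
    assume d: "d1 = 1"
    have s: "sig A B a1 = - a1" using sig_hom[OF tAB h1(2) h1(1)] d by simp
    have n: "m2 A B E (- a1) (m2 B D E a2 a3) = - Y" unfolding Y_def
      by (rule m2_neg1[OF tABE m(1) m2_mor[OF tBDE m(2,3)]])
    have e': "X + m1 A E W + Y = 0" using e d by (simp add: scl1)
    have q: "X - - Y + m1 A E W = X + m1 A E W + Y" by (simp add: algebra_simps)
    have "X - - Y + m1 A E W = 0" using q e' by (rule HOL.trans)
    then have "X - - Y = - m1 A E W" by (simp only: eq_neg_iff_add_eq_0)
    then show ?thesis using b s n unfolding X_def by simp
  qed
qed

lemma assoc_a3:
  assumes t: "trans C [A,B,D,E]"
    and h1: "a1 \<in> morh C A B d1" "d1 < 2" "a1 \<in> cycles C A B"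
    and h2: "a2 \<in> morh C B D d2" "d2 < 2" "a2 \<in> cycles C B D"
    and a3: "a3 \<in> cycles C D E"
  shows "m2 A D E (m2 A B D a1 a2) a3 - m2 A B E (sig A B a1) (m2 B D E a2 a3) \<in> bounds C A E"
proof -
  have tABD: "trans C [A,B,D]" and tABE: "trans C [A,B,E]" and tADE: "trans C [A,D,E]" and tBDE: "trans C [B,D,E]"
    using tr3[OF t] by auto
  have tAB: "trans C [A,B]" and tAE: "trans C [A,E]" and tDE: "trans C [D,E]" using tr2[OF tABD] tr2[OF tADE] by auto
  have m: "a1 \<in> mor C A B" "a2 \<in> mor C B D" using h1 h2 by (simp_all add: cyc_iff)
  have m12: "m2 A B D a1 a2 \<in> mor C A D" by (rule m2_mor[OF tABD m])
  have sm: "sig A B a1 \<in> mor C A B" by (rule sig_mor[OF tAB m(1)])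
  show ?thesis using tDE a3
  proof (induction rule: cyc_induct)
    case (hom a3 d3)
    show ?case by (rule assoc_hom[OF t h1 h2 hom(2,1,3)])
  next
    case (add x x')
    have xm: "x \<in> mor C D E" "x' \<in> mor C D E" using add(1,2) by (simp_all add: cyc_iff)
    have e1: "m2 A D E (m2 A B D a1 a2) (x + x') = m2 A D E (m2 A B D a1 a2) x + m2 A D E (m2 A B D a1 a2) x'"
      by (rule m2_add2[OF tADE m12 xm])
    have e2: "m2 B D E a2 (x + x') = m2 B D E a2 x + m2 B D E a2 x'" by (rule m2_add2[OF tBDE m(2) xm])
    have e3: "m2 A B E (sig A B a1) (m2 B D E a2 x + m2 B D E a2 x') =
       m2 A B E (sig A B a1) (m2 B D E a2 x) + m2 A B E (sig A B a1) (m2 B D E a2 x')"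
      by (rule m2_add2[OF tABE sm m2_mor[OF tBDE m(2) xm(1)] m2_mor[OF tBDE m(2) xm(2)]])
    show ?case unfolding e1 e2 e3 by (rule bd_split[OF tAE add(3,4)])
  qed
qed

lemma assoc_a2:
  assumes t: "trans C [A,B,D,E]"
    and h1: "a1 \<in> morh C A B d1" "d1 < 2" "a1 \<in> cycles C A B"
    and a2: "a2 \<in> cycles C B D"
    and a3: "a3 \<in> cycles C D E"
  shows "m2 A D E (m2 A B D a1 a2) a3 - m2 A B E (sig A B a1) (m2 B D E a2 a3) \<in> bounds C A E"
proof -
  have tABD: "trans C [A,B,D]" and tABE: "trans C [A,B,E]" and tADE: "trans C [A,D,E]" and tBDE: "trans C [B,D,E]"
    using tr3[OF t] by auto
  have tAB: "trans C [A,B]" and tBD: "trans C [B,D]" and tAE: "trans C [A,E]" using tr2[OF tABD] tr2[OF tADE] by auto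
  have m1m: "a1 \<in> mor C A B" using h1 by (simp add: cyc_iff)
  have m3m: "a3 \<in> mor C D E" using a3 by (simp add: cyc_iff)
  have sm: "sig A B a1 \<in> mor C A B" by (rule sig_mor[OF tAB m1m])
  show ?thesis using tBD a2
  proof (induction rule: cyc_induct)
    case (hom a2 d2)
    show ?case by (rule assoc_a3[OF t h1 hom(2,1,3) a3])
  next
    case (add x x')
    have xm: "x \<in> mor C B D" "x' \<in> mor C B D" using add(1,2) by (simp_all add: cyc_iff)
    have e1: "m2 A B D a1 (x + x') = m2 A B D a1 x + m2 A B D a1 x'" by (rule m2_add2[OF tABD m1m xm])
    have e2: "m2 A D E (m2 A B D a1 x + m2 A B D a1 x') a3 = m2 A D E (m2 A B D a1 x) a3 + m2 A D E (m2 A B D a1 x') a3"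
      by (rule m2_add1[OF tADE m2_mor[OF tABD m1m xm(1)] m2_mor[OF tABD m1m xm(2)] m3m])
    have e3: "m2 B D E (x + x') a3 = m2 B D E x a3 + m2 B D E x' a3" by (rule m2_add1[OF tBDE xm m3m])
    have e4: "m2 A B E (sig A B a1) (m2 B D E x a3 + m2 B D E x' a3) =
       m2 A B E (sig A B a1) (m2 B D E x a3) + m2 A B E (sig A B a1) (m2 B D E x' a3)"
      by (rule m2_add2[OF tABE sm m2_mor[OF tBDE xm(1) m3m] m2_mor[OF tBDE xm(2) m3m]])
    show ?case unfolding e1 e2 e3 e4 by (rule bd_split[OF tAE add(3,4)])
  qed
qed

lemma assoc:
  assumes t: "trans C [A,B,D,E]"
    and a1: "a1 \<in> cycles C A B" and a2: "a2 \<in> cycles C B D" and a3: "a3 \<in> cycles C D E"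
  shows "m2 A D E (m2 A B D a1 a2) a3 - m2 A B E (sig A B a1) (m2 B D E a2 a3) \<in> bounds C A E"
proof -
  have tABD: "trans C [A,B,D]" and tABE: "trans C [A,B,E]" and tADE: "trans C [A,D,E]" and tBDE: "trans C [B,D,E]"
    using tr3[OF t] by auto
  have tAB: "trans C [A,B]" and tAE: "trans C [A,E]" using tr2[OF tABD] tr2[OF tADE] by auto
  have m2m: "a2 \<in> mor C B D" using a2 by (simp add: cyc_iff)
  have m3m: "a3 \<in> mor C D E" using a3 by (simp add: cyc_iff)
  have m23: "m2 B D E a2 a3 \<in> mor C B E" by (rule m2_mor[OF tBDE m2m m3m])
  show ?thesis using tAB a1
  proof (induction rule: cyc_induct)
    case (hom a1 d1)
    show ?case by (rule assoc_a2[OF t hom(2,1,3) a2 a3])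
  next
    case (add x x')
    have xm: "x \<in> mor C A B" "x' \<in> mor C A B" using add(1,2) by (simp_all add: cyc_iff)
    have e1: "m2 A B D (x + x') a2 = m2 A B D x a2 + m2 A B D x' a2" by (rule m2_add1[OF tABD xm m2m])
    have e2: "m2 A D E (m2 A B D x a2 + m2 A B D x' a2) a3 = m2 A D E (m2 A B D x a2) a3 + m2 A D E (m2 A B D x' a2) a3"
      by (rule m2_add1[OF tADE m2_mor[OF tABD xm(1) m2m] m2_mor[OF tABD xm(2) m2m] m3m])
    have e3: "sig A B (x + x') = sig A B x + sig A B x'" by (rule sig_add[OF tAB xm])
    have e4: "m2 A B E (sig A B x + sig A B x') (m2 B D E a2 a3) =
       m2 A B E (sig A B x) (m2 B D E a2 a3) + m2 A B E (sig A B x') (m2 B D E a2 a3)"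
      by (rule m2_add1[OF tABE sig_mor[OF tAB xm(1)] sig_mor[OF tAB xm(2)] m23])
    show ?case unfolding e1 e2 e3 e4 by (rule bd_split[OF tAE add(3,4)])
  qed
qed

end

context AP begin

definition eiso :: "'o \<Rightarrow> 'o \<Rightarrow> 'o \<Rightarrow> 'o \<Rightarrow> ('m \<Rightarrow> 'm) \<Rightarrow> bool" where
  "eiso A B A' B' phi \<longleftrightarrow>
     (\<forall>z\<in>cycles C A B. phi z \<in> cycles C A' B') \<and>
     (\<forall>b\<in>bounds C A B. phi b \<in> bounds C A' B') \<and>
     (\<forall>x\<in>cycles C A B. \<forall>y\<in>cycles C A B. phi (x - y) = phi x - phi y) \<and>
     (\<forall>z\<in>cycles C A B. phi z \<in> bounds C A' B' \<longrightarrow> z \<in> bounds C A B) \<and>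
     (\<forall>w\<in>cycles C A' B'. \<exists>z\<in>cycles C A B. w - phi z \<in> bounds C A' B')"

lemma eiso_comp:
  assumes t2: "trans C [A',B']" and t3: "trans C [A'',B'']"
    and f: "eiso A B A' B' phi" and g: "eiso A' B' A'' B'' psi"
  shows "eiso A B A'' B'' (\<lambda>x. psi (phi x))"
  unfolding eiso_def
proof (intro conjI ballI impI)
  fix z assume z: "z \<in> cycles C A B"
  then show "psi (phi z) \<in> cycles C A'' B''" using f g unfolding eiso_def by blast
next
  fix b assume "b \<in> bounds C A B"
  then show "psi (phi b) \<in> bounds C A'' B''" using f g unfolding eiso_def by blast
next
  fix x y assume x: "x \<in> cycles C A B" and y: "y \<in> cycles C A B"
  have "phi (x - y) = phi x - phi y" using f x y unfolding eiso_def by blast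
  moreover have "phi x \<in> cycles C A' B'" "phi y \<in> cycles C A' B'" using f x y unfolding eiso_def by blast+
  ultimately show "psi (phi (x - y)) = psi (phi x) - psi (phi y)" using g unfolding eiso_def by simp
next
  fix z assume z: "z \<in> cycles C A B" and b: "psi (phi z) \<in> bounds C A'' B''"
  have "phi z \<in> cycles C A' B'" using f z unfolding eiso_def by blast
  then have "phi z \<in> bounds C A' B'" using g b unfolding eiso_def by blast
  then show "z \<in> bounds C A B" using f z unfolding eiso_def by blast
next
  fix w assume w: "w \<in> cycles C A'' B''"
  obtain u where u: "u \<in> cycles C A' B'" "w - psi u \<in> bounds C A'' B''" using g w unfolding eiso_def by blast
  obtain z where z: "z \<in> cycles C A B" "u - phi z \<in> bounds C A' B'" using f u(1) unfolding eiso_def by blast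
  have pz: "phi z \<in> cycles C A' B'" using f z(1) unfolding eiso_def by blast
  have "psi (u - phi z) \<in> bounds C A'' B''" using g z(2) unfolding eiso_def by blast
  moreover have "psi (u - phi z) = psi u - psi (phi z)" using g u(1) pz unfolding eiso_def by blast
  ultimately have "psi u - psi (phi z) \<in> bounds C A'' B''" by simp
  then have "(w - psi u) + (psi u - psi (phi z)) \<in> bounds C A'' B''" by (rule bd_add[OF t3 u(2)])
  then have "w - psi (phi z) \<in> bounds C A'' B''" by simp
  then show "\<exists>z\<in>cycles C A B. w - psi (phi z) \<in> bounds C A'' B''" using z(1) by blast
qed

lemma eiso_cong:
  assumes t2: "trans C [A',B']" and f: "eiso A B A' B' phi"
    and c1: "\<And>z. z \<in> cycles C A B \<Longrightarrow> chi z \<in> cycles C A' B'"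
    and c2: "\<And>b. b \<in> bounds C A B \<Longrightarrow> chi b \<in> bounds C A' B'"
    and c3: "\<And>x y. x \<in> cycles C A B \<Longrightarrow> y \<in> cycles C A B \<Longrightarrow> chi (x - y) = chi x - chi y"
    and c4: "\<And>z. z \<in> cycles C A B \<Longrightarrow> chi z - phi z \<in> bounds C A' B'"
  shows "eiso A B A' B' chi"
  unfolding eiso_def
proof (intro conjI ballI impI)
  fix z assume z: "z \<in> cycles C A B" and b: "chi z \<in> bounds C A' B'"
  have "chi z - (chi z - phi z) \<in> bounds C A' B'" by (rule bd_diff[OF t2 b c4[OF z]])
  then have "phi z \<in> bounds C A' B'" by simp
  then show "z \<in> bounds C A B" using f z unfolding eiso_def by blast
next
  fix w assume w: "w \<in> cycles C A' B'"
  obtain z where z: "z \<in> cycles C A B" "w - phi z \<in> bounds C A' B'" using f w unfolding eiso_def by blast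
  have "(w - phi z) - (chi z - phi z) \<in> bounds C A' B'" by (rule bd_diff[OF t2 z(2) c4[OF z(1)]])
  then have "w - chi z \<in> bounds C A' B'" by simp
  then show "\<exists>z\<in>cycles C A B. w - chi z \<in> bounds C A' B'" using z(1) by blast
qed (auto intro: c1 c2 c3)

lemma eiso_cancel:
  assumes t2: "trans C [A',B']" and t3: "trans C [A'',B'']"
    and c1: "\<And>z. z \<in> cycles C A B \<Longrightarrow> F z \<in> cycles C A' B'"
    and c2: "\<And>b. b \<in> bounds C A B \<Longrightarrow> F b \<in> bounds C A' B'"
    and c3: "\<And>x y. x \<in> cycles C A B \<Longrightarrow> y \<in> cycles C A B \<Longrightarrow> F (x - y) = F x - F y"
    and g: "eiso A' B' A'' B'' G" and k: "eiso A B A'' B'' K"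
    and c4: "\<And>z. z \<in> cycles C A B \<Longrightarrow> G (F z) - K z \<in> bounds C A'' B''"
  shows "eiso A B A' B' F"
  unfolding eiso_def
proof (intro conjI ballI impI)
  fix z assume z: "z \<in> cycles C A B" and b: "F z \<in> bounds C A' B'"
  have "G (F z) \<in> bounds C A'' B''" using g b unfolding eiso_def by blast
  then have "G (F z) - (G (F z) - K z) \<in> bounds C A'' B''" by (rule bd_diff[OF t3 _ c4[OF z]])
  then have "K z \<in> bounds C A'' B''" by simp
  then show "z \<in> bounds C A B" using k z unfolding eiso_def by blast
next
  fix w assume w: "w \<in> cycles C A' B'"
  have gw: "G w \<in> cycles C A'' B''" using g w unfolding eiso_def by blast
  obtain z where z: "z \<in> cycles C A B" "G w - K z \<in> bounds C A'' B''" using k gw unfolding eiso_def by blast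
  have fz: "F z \<in> cycles C A' B'" by (rule c1[OF z(1)])
  have "G (w - F z) = G w - G (F z)" using g w fz unfolding eiso_def by blast
  also have "\<dots> = (G w - K z) - (G (F z) - K z)" by simp
  finally have "G (w - F z) \<in> bounds C A'' B''" using bd_diff[OF t3 z(2) c4[OF z(1)]] by simp
  moreover have "w - F z \<in> cycles C A' B'" by (rule cyc_diff[OF t2 w fz])
  ultimately have "w - F z \<in> bounds C A' B'" using g unfolding eiso_def by blast
  then show "\<exists>z\<in>cycles C A B. w - F z \<in> bounds C A' B'" using z(1) by blast
qed (auto intro: c1 c2 c3)

lemma sig_diff: assumes t: "trans C [A,B]" and x: "x \<in> mor C A B" and y: "y \<in> mor C A B"
  shows "sig A B (x - y) = sig A B x - sig A B y"
  by (rule addhom_diff[where S="mor C A B" and f="sig A B"]) (simp_all add: sig_add[OF t] mor_diff[OF t] x y)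

lemma eiso_sig: assumes t: "trans C [A,B]" shows "eiso A B A B (sig A B)"
  unfolding eiso_def
proof (intro conjI ballI impI)
  fix z assume "z \<in> cycles C A B" then show "sig A B z \<in> cycles C A B" by (rule sig_cyc[OF t])
next
  fix b assume "b \<in> bounds C A B" then show "sig A B b \<in> bounds C A B" by (rule sig_bd[OF t])
next
  fix x y assume "x \<in> cycles C A B" "y \<in> cycles C A B"
  then show "sig A B (x - y) = sig A B x - sig A B y" by (intro sig_diff[OF t] cyc_mor)
next
  fix z assume z: "z \<in> cycles C A B" and b: "sig A B z \<in> bounds C A B"
  have "sig A B (sig A B z) \<in> bounds C A B" by (rule sig_bd[OF t b])
  then show "z \<in> bounds C A B" using sig_sig[OF t cyc_mor[OF z]] by simp
next
  fix w assume w: "w \<in> cycles C A B"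
  have "sig A B w \<in> cycles C A B" by (rule sig_cyc[OF t w])
  moreover have "w - sig A B (sig A B w) \<in> bounds C A B" using sig_sig[OF t cyc_mor[OF w]] bd_0[OF t] by simp
  ultimately show "\<exists>z\<in>cycles C A B. w - sig A B z \<in> bounds C A B" by blast
qed

lemma hc_mem: "trans C [A,B] \<Longrightarrow> u \<in> hclass C A B u"
  unfolding hclass_def using bd_0[of A B] by force

lemma hc_eq: assumes t: "trans C [A,B]"
  shows "hclass C A B u = hclass C A B v \<longleftrightarrow> u - v \<in> bounds C A B"
proof
  assume "hclass C A B u = hclass C A B v"
  then have "u \<in> hclass C A B v" using hc_mem[OF t, of u] by simp
  then obtain b where "u = v + b" "b \<in> bounds C A B" unfolding hclass_def by blast
  then show "u - v \<in> bounds C A B" by simp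
next
  assume d: "u - v \<in> bounds C A B"
  show "hclass C A B u = hclass C A B v"
  proof
    show "hclass C A B u \<subseteq> hclass C A B v"
    proof
      fix x assume "x \<in> hclass C A B u"
      then obtain b where b: "x = u + b" "b \<in> bounds C A B" unfolding hclass_def by blast
      have "(u - v) + b \<in> bounds C A B" by (rule bd_add[OF t d b(2)])
      moreover have "x = v + ((u - v) + b)" using b(1) by simp
      ultimately show "x \<in> hclass C A B v" unfolding hclass_def by blast
    qed
  next
    show "hclass C A B v \<subseteq> hclass C A B u"
    proof
      fix x assume "x \<in> hclass C A B v"
      then obtain b where b: "x = v + b" "b \<in> bounds C A B" unfolding hclass_def by blast
      have "b - (u - v) \<in> bounds C A B" by (rule bd_diff[OF t b(2) d])
      moreover have "x = u + (b - (u - v))" using b(1) by simp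
      ultimately show "x \<in> hclass C A B u" unfolding hclass_def by blast
    qed
  qed
qed

lemma hc_some: assumes t: "trans C [A,B]" and z: "z \<in> cycles C A B"
  shows "(SOME x. x \<in> hclass C A B z) \<in> cycles C A B \<and> (SOME x. x \<in> hclass C A B z) - z \<in> bounds C A B"
proof -
  have "(SOME x. x \<in> hclass C A B z) \<in> hclass C A B z" by (rule someI[of "\<lambda>x. x \<in> hclass C A B z" z, OF hc_mem[OF t]])
  then obtain b where b: "(SOME x. x \<in> hclass C A B z) = z + b" "b \<in> bounds C A B" unfolding hclass_def by blast
  have "z + b \<in> cycles C A B" by (rule cyc_add[OF t z bd_cyc[OF t b(2)]])
  then show ?thesis using b by simp
qed

lemma induced_val:
  assumes t: "trans C [A,B]" and t2: "trans C [A',B']" and z: "z \<in> cycles C A B"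
    and pb: "\<And>b. b \<in> bounds C A B \<Longrightarrow> phi b \<in> bounds C A' B'"
    and pa: "\<And>x y. x \<in> cycles C A B \<Longrightarrow> y \<in> cycles C A B \<Longrightarrow> phi (x - y) = phi x - phi y"
  shows "hclass C A' B' (phi (SOME x. x \<in> hclass C A B z)) = hclass C A' B' (phi z)"
proof -
  let ?s = "SOME x. x \<in> hclass C A B z"
  have s: "?s \<in> cycles C A B" "?s - z \<in> bounds C A B" using hc_some[OF t z] by auto
  have "phi (?s - z) \<in> bounds C A' B'" by (rule pb[OF s(2)])
  then have "phi ?s - phi z \<in> bounds C A' B'" using pa[OF s(1) z] by simp
  then show ?thesis using hc_eq[OF t2] by blast
qed

lemma eiso_iff:
  assumes t: "trans C [A,B]" and t2: "trans C [A',B']"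
    and pa: "\<And>x y. x \<in> cycles C A B \<Longrightarrow> y \<in> cycles C A B \<Longrightarrow> phi (x - y) = phi x - phi y"
  shows "induces_iso C A B A' B' phi \<longleftrightarrow> eiso A B A' B' phi"
proof
  assume ii: "induces_iso C A B A' B' phi"
  have pz: "\<And>z. z \<in> cycles C A B \<Longrightarrow> phi z \<in> cycles C A' B'" using ii unfolding induces_iso_def by blast
  have pb: "\<And>b. b \<in> bounds C A B \<Longrightarrow> phi b \<in> bounds C A' B'" using ii unfolding induces_iso_def by blast
  have bij: "bij_betw (\<lambda>c. hclass C A' B' (phi (SOME x. x \<in> c))) (homology C A B) (homology C A' B')"
    using ii unfolding induces_iso_def by blast
  let ?f = "\<lambda>c. hclass C A' B' (phi (SOME x. x \<in> c))"
  have fv: "\<And>z. z \<in> cycles C A B \<Longrightarrow> ?f (hclass C A B z) = hclass C A' B' (phi z)"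
    by (rule induced_val[OF t t2 _ pb pa])
  have p0: "phi 0 = 0" using pa[OF cyc_0[OF t] cyc_0[OF t]] by simp
  show "eiso A B A' B' phi"
    unfolding eiso_def
  proof (intro conjI ballI impI)
    fix z assume z: "z \<in> cycles C A B" and b: "phi z \<in> bounds C A' B'"
    have "?f (hclass C A B z) = hclass C A' B' (phi z)" by (rule fv[OF z])
    also have "\<dots> = hclass C A' B' (phi 0)" using b p0 hc_eq[OF t2] by simp
    also have "\<dots> = ?f (hclass C A B 0)" using fv[OF cyc_0[OF t]] by simp
    finally have "?f (hclass C A B z) = ?f (hclass C A B 0)" .
    moreover have "hclass C A B z \<in> homology C A B" "hclass C A B 0 \<in> homology C A B"
      unfolding homology_def using z cyc_0[OF t] by auto
    ultimately have "hclass C A B z = hclass C A B 0" using bij unfolding bij_betw_def inj_on_def by blast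
    then show "z \<in> bounds C A B" using hc_eq[OF t] by simp
  next
    fix w assume w: "w \<in> cycles C A' B'"
    have "hclass C A' B' w \<in> homology C A' B'" unfolding homology_def using w by auto
    then have "hclass C A' B' w \<in> ?f ` homology C A B" using bij unfolding bij_betw_def by simp
    then obtain z where z: "z \<in> cycles C A B" "hclass C A' B' w = ?f (hclass C A B z)"
      unfolding homology_def by auto
    then have "hclass C A' B' w = hclass C A' B' (phi z)" using fv by simp
    then have "w - phi z \<in> bounds C A' B'" using hc_eq[OF t2] by simp
    then show "\<exists>z\<in>cycles C A B. w - phi z \<in> bounds C A' B'" using z(1) by blast
  qed (auto intro: pz pb pa)
next
  assume e: "eiso A B A' B' phi"
  have pz: "\<And>z. z \<in> cycles C A B \<Longrightarrow> phi z \<in> cycles C A' B'" using e unfolding eiso_def by blast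
  have pb: "\<And>b. b \<in> bounds C A B \<Longrightarrow> phi b \<in> bounds C A' B'" using e unfolding eiso_def by blast
  have pi: "\<And>z. z \<in> cycles C A B \<Longrightarrow> phi z \<in> bounds C A' B' \<Longrightarrow> z \<in> bounds C A B" using e unfolding eiso_def by blast
  have ps: "\<And>w. w \<in> cycles C A' B' \<Longrightarrow> \<exists>z\<in>cycles C A B. w - phi z \<in> bounds C A' B'" using e unfolding eiso_def by blast
  let ?f = "\<lambda>c. hclass C A' B' (phi (SOME x. x \<in> c))"
  have fv: "\<And>z. z \<in> cycles C A B \<Longrightarrow> ?f (hclass C A B z) = hclass C A' B' (phi z)"
    by (rule induced_val[OF t t2 _ pb pa])
  have inj: "inj_on ?f (homology C A B)"
  proof (rule inj_onI)
    fix c1 c2 assume c1: "c1 \<in> homology C A B" and c2: "c2 \<in> homology C A B" and eq: "?f c1 = ?f c2"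
    obtain z1 where z1: "z1 \<in> cycles C A B" "c1 = hclass C A B z1" using c1 unfolding homology_def by auto
    obtain z2 where z2: "z2 \<in> cycles C A B" "c2 = hclass C A B z2" using c2 unfolding homology_def by auto
    have "hclass C A' B' (phi z1) = hclass C A' B' (phi z2)" using eq fv z1 z2 by simp
    then have "phi z1 - phi z2 \<in> bounds C A' B'" using hc_eq[OF t2] by simp
    then have "phi (z1 - z2) \<in> bounds C A' B'" using pa[OF z1(1) z2(1)] by simp
    then have "z1 - z2 \<in> bounds C A B" using pi[OF cyc_diff[OF t z1(1) z2(1)]] by simp
    then show "c1 = c2" using z1(2) z2(2) hc_eq[OF t] by simp
  qed
  have img: "?f ` homology C A B = homology C A' B'"
  proof
    show "?f ` homology C A B \<subseteq> homology C A' B'"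
    proof
      fix c assume "c \<in> ?f ` homology C A B"
      then obtain z where z: "z \<in> cycles C A B" "c = ?f (hclass C A B z)" unfolding homology_def by auto
      then have "c = hclass C A' B' (phi z)" using fv by simp
      then show "c \<in> homology C A' B'" unfolding homology_def using pz[OF z(1)] by auto
    qed
  next
    show "homology C A' B' \<subseteq> ?f ` homology C A B"
    proof
      fix c assume "c \<in> homology C A' B'"
      then obtain w where w: "w \<in> cycles C A' B'" "c = hclass C A' B' w" unfolding homology_def by auto
      obtain z where z: "z \<in> cycles C A B" "w - phi z \<in> bounds C A' B'" using ps[OF w(1)] by blast
      have "c = hclass C A' B' (phi z)" using w(2) z(2) hc_eq[OF t2] by simp
      also have "\<dots> = ?f (hclass C A B z)" using fv[OF z(1)] by simp
      finally show "c \<in> ?f ` homology C A B" unfolding homology_def using z(1) by auto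
    qed
  qed
  show "induces_iso C A B A' B' phi"
    unfolding induces_iso_def bij_betw_def using inj img pz pb by blast
qed

end

context AP begin

lemma R_props:
  assumes t: "trans C [A,B,D]" and e: "e \<in> cycles C A B"
  shows "\<And>x. x \<in> cycles C B D \<Longrightarrow> m2 A B D e x \<in> cycles C A D"
    and "\<And>b. b \<in> bounds C B D \<Longrightarrow> m2 A B D e b \<in> bounds C A D"
    and "\<And>x y. x \<in> cycles C B D \<Longrightarrow> y \<in> cycles C B D \<Longrightarrow> m2 A B D e (x - y) = m2 A B D e x - m2 A B D e y"
proof -
  fix x assume "x \<in> cycles C B D" then show "m2 A B D e x \<in> cycles C A D" by (rule m2_cyc[OF t e])
next
  fix b assume "b \<in> bounds C B D"
  then obtain u where u: "u \<in> mor C B D" "b = m1 B D u" unfolding bd_iff by blast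
  then show "m2 A B D e b \<in> bounds C A D" using m2_bdr[OF t e u(1)] by simp
next
  fix x y assume "x \<in> cycles C B D" "y \<in> cycles C B D"
  then show "m2 A B D e (x - y) = m2 A B D e x - m2 A B D e y"
    by (intro m2_diff2[OF t cyc_mor[OF e]] cyc_mor)
qed

lemma L_props:
  assumes t: "trans C [A,B,D]" and f: "f \<in> cycles C B D"
  shows "\<And>x. x \<in> cycles C A B \<Longrightarrow> m2 A B D x f \<in> cycles C A D"
    and "\<And>b. b \<in> bounds C A B \<Longrightarrow> m2 A B D b f \<in> bounds C A D"
    and "\<And>x y. x \<in> cycles C A B \<Longrightarrow> y \<in> cycles C A B \<Longrightarrow> m2 A B D (x - y) f = m2 A B D x f - m2 A B D y f"
proof -
  fix x assume "x \<in> cycles C A B" then show "m2 A B D x f \<in> cycles C A D" by (rule m2_cyc[OF t _ f])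
next
  fix b assume "b \<in> bounds C A B"
  then obtain u where u: "u \<in> mor C A B" "b = m1 A B u" unfolding bd_iff by blast
  then show "m2 A B D b f \<in> bounds C A D" using m2_bdl[OF t u(1) f] by simp
next
  fix x y assume "x \<in> cycles C A B" "y \<in> cycles C A B"
  then show "m2 A B D (x - y) f = m2 A B D x f - m2 A B D y f"
    by (intro m2_diff1[OF t _ _ cyc_mor[OF f]] cyc_mor)
qed

lemma qi_parts: assumes q: "quasi_iso C A A' f"
  shows "trans C [A, A']" "f \<in> mor C A A'" "mu C [A, A'] [f] = 0"
    "\<And>B'. trans C [A, A', B'] \<Longrightarrow> induces_iso C A' B' A B' (\<lambda>x. mu C [A, A', B'] [f, x])"
    "\<And>B. trans C [B, A, A'] \<Longrightarrow> induces_iso C B A B A' (\<lambda>x. mu C [B, A, A'] [x, f])"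
  using q unfolding quasi_iso_def by simp_all

lemma qi_cyc: "quasi_iso C A A' f \<Longrightarrow> f \<in> cycles C A A'"
  unfolding cyc_iff using qi_parts(2,3) by simp

lemma qi_R: assumes q: "quasi_iso C A A' f" and t: "trans C [A,A',B']"
  shows "eiso A' B' A B' (\<lambda>x. m2 A A' B' f x)"
proof -
  have ii: "induces_iso C A' B' A B' (\<lambda>x. m2 A A' B' f x)" by (rule qi_parts(4)[OF q t])
  have "induces_iso C A' B' A B' (\<lambda>x. m2 A A' B' f x) \<longleftrightarrow> eiso A' B' A B' (\<lambda>x. m2 A A' B' f x)"
    by (rule eiso_iff[where phi="\<lambda>x. m2 A A' B' f x", OF tr2(2)[OF t] tr2(3)[OF t] R_props(3)[OF t qi_cyc[OF q]]])
  then show ?thesis using ii by simp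
qed

lemma qi_L: assumes q: "quasi_iso C A A' f" and t: "trans C [B,A,A']"
  shows "eiso B A B A' (\<lambda>x. m2 B A A' x f)"
proof -
  have ii: "induces_iso C B A B A' (\<lambda>x. m2 B A A' x f)" by (rule qi_parts(5)[OF q t])
  have "induces_iso C B A B A' (\<lambda>x. m2 B A A' x f) \<longleftrightarrow> eiso B A B A' (\<lambda>x. m2 B A A' x f)"
    by (rule eiso_iff[where phi="\<lambda>x. m2 B A A' x f", OF tr2(1)[OF t] tr2(3)[OF t] L_props(3)[OF t qi_cyc[OF q]]])
  then show ?thesis using ii by simp
qed

lemma R_sig:
  assumes t: "trans C [A,B,D]" and e: "e \<in> cycles C A B" and r: "eiso B D A D (\<lambda>x. m2 A B D e x)"
  shows "eiso B D A D (\<lambda>x. m2 A B D (sig A B e) x)"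
proof -
  have tAB: "trans C [A,B]" and tBD: "trans C [B,D]" and tAD: "trans C [A,D]" using tr2[OF t] by auto
  have se: "sig A B e \<in> cycles C A B" by (rule sig_cyc[OF tAB e])
  have c1: "eiso B D A D (\<lambda>x. m2 A B D e (sig B D x))"
    by (rule eiso_comp[OF tBD tAD eiso_sig[OF tBD] r])
  have c2: "eiso B D A D (\<lambda>x. sig A D (m2 A B D e (sig B D x)))"
    by (rule eiso_comp[OF tAD tAD c1 eiso_sig[OF tAD]])
  show ?thesis
  proof (rule eiso_cong[OF tAD c2])
    fix z assume z: "z \<in> cycles C B D"
    have "m2 A B D (sig A B e) z = sig A D (m2 A B D e (sig B D z))"
      by (rule m2_sig[OF t cyc_mor[OF e] cyc_mor[OF z]])
    then show "m2 A B D (sig A B e) z - sig A D (m2 A B D e (sig B D z)) \<in> bounds C A D"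
      using bd_0[OF tAD] by simp
  qed (simp_all add: R_props[OF t se])
qed

lemma side1:
  assumes t4: "trans C [A1,A2,A3,Ap]" and t4': "trans C [A1,A3,B',Ap]"
    and q12: "quasi_iso C A1 A2 e12" and q23: "quasi_iso C A2 A3 e23" and qh: "quasi_iso C B' Ap h"
  shows "eiso A3 B' A1 B' (\<lambda>x. m2 A1 A3 B' (m2 A1 A2 A3 e12 e23) x)"
proof -
  note T = tr3[OF t4] tr3[OF t4']
  have t123: "trans C [A1,A2,A3]" and t12p: "trans C [A1,A2,Ap]" and t13p: "trans C [A1,A3,Ap]"
    and t23p: "trans C [A2,A3,Ap]" and t13b: "trans C [A1,A3,B']" and t1bp: "trans C [A1,B',Ap]"
    and t3bp: "trans C [A3,B',Ap]" using T by auto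
  have p1p: "trans C [A1,Ap]" and p1b: "trans C [A1,B']" and p2p: "trans C [A2,Ap]"
    using tr2[OF t12p] tr2[OF t13b] by auto
  have c12: "e12 \<in> cycles C A1 A2" and c23: "e23 \<in> cycles C A2 A3" and ch: "h \<in> cycles C B' Ap"
    using qi_cyc[OF q12] qi_cyc[OF q23] qi_cyc[OF qh] by simp_all
  define e13 where "e13 = m2 A1 A2 A3 e12 e23"
  have c13: "e13 \<in> cycles C A1 A3" unfolding e13_def by (rule m2_cyc[OF t123 c12 c23])
  have s12: "sig A1 A2 e12 \<in> cycles C A1 A2" by (rule sig_cyc[OF tr2(1)[OF t123] c12])
  have s13: "sig A1 A3 e13 \<in> cycles C A1 A3" by (rule sig_cyc[OF tr2(3)[OF t123] c13])
  have r23: "eiso A3 Ap A2 Ap (\<lambda>x. m2 A2 A3 Ap e23 x)" by (rule qi_R[OF q23 t23p])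
  have r12: "eiso A2 Ap A1 Ap (\<lambda>x. m2 A1 A2 Ap e12 x)" by (rule qi_R[OF q12 t12p])
  have r12s: "eiso A2 Ap A1 Ap (\<lambda>x. m2 A1 A2 Ap (sig A1 A2 e12) x)" by (rule R_sig[OF t12p c12 r12])
  have comp: "eiso A3 Ap A1 Ap (\<lambda>x. m2 A1 A2 Ap (sig A1 A2 e12) (m2 A2 A3 Ap e23 x))"
    by (rule eiso_comp[OF p2p p1p r23 r12s])
  have r13: "eiso A3 Ap A1 Ap (\<lambda>x. m2 A1 A3 Ap e13 x)"
  proof (rule eiso_cong[OF p1p comp])
    fix z assume "z \<in> cycles C A3 Ap"
    then show "m2 A1 A3 Ap e13 z - m2 A1 A2 Ap (sig A1 A2 e12) (m2 A2 A3 Ap e23 z) \<in> bounds C A1 Ap"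
      unfolding e13_def by (rule assoc[OF t4 c12 c23])
  qed (simp_all add: R_props[OF t13p c13])
  have r13s: "eiso A3 Ap A1 Ap (\<lambda>x. m2 A1 A3 Ap (sig A1 A3 e13) x)" by (rule R_sig[OF t13p c13 r13])
  have lh3: "eiso A3 B' A3 Ap (\<lambda>x. m2 A3 B' Ap x h)" by (rule qi_L[OF qh t3bp])
  have lh1: "eiso A1 B' A1 Ap (\<lambda>x. m2 A1 B' Ap x h)" by (rule qi_L[OF qh t1bp])
  have K: "eiso A3 B' A1 Ap (\<lambda>x. m2 A1 A3 Ap (sig A1 A3 e13) (m2 A3 B' Ap x h))"
    by (rule eiso_comp[OF tr2(3)[OF t3bp] p1p lh3 r13s])
  have "eiso A3 B' A1 B' (\<lambda>x. m2 A1 A3 B' e13 x)"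
  proof (rule eiso_cancel[OF p1b p1p _ _ _ lh1 K])
    fix z assume "z \<in> cycles C A3 B'"
    then show "m2 A1 B' Ap (m2 A1 A3 B' e13 z) h - m2 A1 A3 Ap (sig A1 A3 e13) (m2 A3 B' Ap z h) \<in> bounds C A1 Ap"
      by (rule assoc[OF t4' c13 _ ch])
  qed (simp_all add: R_props[OF t13b c13])
  then show ?thesis unfolding e13_def .
qed

lemma side2:
  assumes t4: "trans C [Am,A1,A2,A3]" and t4': "trans C [Am,B,A1,A3]"
    and q12: "quasi_iso C A1 A2 e12" and q23: "quasi_iso C A2 A3 e23" and qg: "quasi_iso C Am B g"
  shows "eiso B A1 B A3 (\<lambda>x. m2 B A1 A3 x (m2 A1 A2 A3 e12 e23))"
proof -
  note T = tr3[OF t4] tr3[OF t4']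
  have tm12: "trans C [Am,A1,A2]" and tm13: "trans C [Am,A1,A3]" and tm23: "trans C [Am,A2,A3]"
    and t123: "trans C [A1,A2,A3]" and tmb1: "trans C [Am,B,A1]" and tmb3: "trans C [Am,B,A3]"
    and tb13: "trans C [B,A1,A3]" using T by auto
  have pm1: "trans C [Am,A1]" and pm2: "trans C [Am,A2]" and pm3: "trans C [Am,A3]" and pmb: "trans C [Am,B]"
    and pb3: "trans C [B,A3]"
    using tr2[OF tm12] tr2[OF tm13] tr2[OF tmb1] tr2[OF tb13] by auto
  have c12: "e12 \<in> cycles C A1 A2" and c23: "e23 \<in> cycles C A2 A3" and cg: "g \<in> cycles C Am B"
    using qi_cyc[OF q12] qi_cyc[OF q23] qi_cyc[OF qg] by simp_all
  define e13 where "e13 = m2 A1 A2 A3 e12 e23"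
  have c13: "e13 \<in> cycles C A1 A3" unfolding e13_def by (rule m2_cyc[OF t123 c12 c23])
  have sg: "sig Am B g \<in> cycles C Am B" by (rule sig_cyc[OF pmb cg])
  have l12: "eiso Am A1 Am A2 (\<lambda>x. m2 Am A1 A2 x e12)" by (rule qi_L[OF q12 tm12])
  have l23: "eiso Am A2 Am A3 (\<lambda>x. m2 Am A2 A3 x e23)" by (rule qi_L[OF q23 tm23])
  have c1: "eiso Am A1 Am A2 (\<lambda>x. m2 Am A1 A2 (sig Am A1 x) e12)"
    by (rule eiso_comp[OF pm1 pm2 eiso_sig[OF pm1] l12])
  have c2: "eiso Am A1 Am A3 (\<lambda>x. m2 Am A2 A3 (m2 Am A1 A2 (sig Am A1 x) e12) e23)"
    by (rule eiso_comp[OF pm2 pm3 c1 l23])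
  have l13: "eiso Am A1 Am A3 (\<lambda>x. m2 Am A1 A3 x e13)"
  proof (rule eiso_cong[OF pm3 c2])
    fix z assume z: "z \<in> cycles C Am A1"
    have sz: "sig Am A1 z \<in> cycles C Am A1" by (rule sig_cyc[OF pm1 z])
    have "m2 Am A2 A3 (m2 Am A1 A2 (sig Am A1 z) e12) e23 - m2 Am A1 A3 (sig Am A1 (sig Am A1 z)) (m2 A1 A2 A3 e12 e23)
       \<in> bounds C Am A3" by (rule assoc[OF t4 sz c12 c23])
    then have "m2 Am A2 A3 (m2 Am A1 A2 (sig Am A1 z) e12) e23 - m2 Am A1 A3 z e13 \<in> bounds C Am A3"
      unfolding e13_def using sig_sig[OF pm1 cyc_mor[OF z]] by simp
    then have "- (m2 Am A2 A3 (m2 Am A1 A2 (sig Am A1 z) e12) e23 - m2 Am A1 A3 z e13) \<in> bounds C Am A3"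
      by (rule bd_neg[OF pm3])
    then show "m2 Am A1 A3 z e13 - m2 Am A2 A3 (m2 Am A1 A2 (sig Am A1 z) e12) e23 \<in> bounds C Am A3"
      by simp
  qed (simp_all add: L_props[OF tm13 c13])
  have rg1: "eiso B A1 Am A1 (\<lambda>x. m2 Am B A1 g x)" by (rule qi_R[OF qg tmb1])
  have rg3: "eiso B A3 Am A3 (\<lambda>x. m2 Am B A3 g x)" by (rule qi_R[OF qg tmb3])
  have rg1s: "eiso B A1 Am A1 (\<lambda>x. m2 Am B A1 (sig Am B g) x)" by (rule R_sig[OF tmb1 cg rg1])
  have K: "eiso B A1 Am A3 (\<lambda>x. m2 Am A1 A3 (m2 Am B A1 (sig Am B g) x) e13)"
    by (rule eiso_comp[OF pm1 pm3 rg1s l13])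
  have "eiso B A1 B A3 (\<lambda>x. m2 B A1 A3 x e13)"
  proof (rule eiso_cancel[OF pb3 pm3 _ _ _ rg3 K])
    fix z assume z: "z \<in> cycles C B A1"
    have "m2 Am A1 A3 (m2 Am B A1 (sig Am B g) z) e13 - m2 Am B A3 (sig Am B (sig Am B g)) (m2 B A1 A3 z e13)
       \<in> bounds C Am A3" by (rule assoc[OF t4' sg z c13])
    then have "m2 Am A1 A3 (m2 Am B A1 (sig Am B g) z) e13 - m2 Am B A3 g (m2 B A1 A3 z e13) \<in> bounds C Am A3"
      using sig_sig[OF pmb cyc_mor[OF cg]] by simp
    then have "- (m2 Am A1 A3 (m2 Am B A1 (sig Am B g) z) e13 - m2 Am B A3 g (m2 B A1 A3 z e13)) \<in> bounds C Am A3"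
      by (rule bd_neg[OF pm3])
    then show "m2 Am B A3 g (m2 B A1 A3 z e13) - m2 Am A1 A3 (m2 Am B A1 (sig Am B g) z) e13 \<in> bounds C Am A3"
      by simp
  qed (simp_all add: L_props[OF tb13 c13])
  then show ?thesis unfolding e13_def .
qed

end

theorem mainTheorem15:
  fixes C :: "('o, 'k::field, 'm::ab_group_add) ainf_pre"
    and A1 A2 A3 :: 'o and e12 e23 :: 'm
  assumes "ainf_precat C"
    and "unital C"
    and "trans C [A1, A2, A3]"
    and "quasi_iso C A1 A2 e12"
    and "quasi_iso C A2 A3 e23"
  shows "quasi_iso C A1 A3 (mu C [A1, A2, A3] [e12, e23])"
proof -
  interpret AP C by (rule AP.intro) fact
  note un = assms(2)[unfolded unital_def]
  have t123: "trans C [A1,A2,A3]" by fact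
  have p13: "trans C [A1,A3]" using tr2[OF t123] by auto
  have c13: "mu C [A1, A2, A3] [e12, e23] \<in> cycles C A1 A3"
    by (rule m2_cyc[OF t123 qi_cyc[OF assms(4)] qi_cyc[OF assms(5)]])
  have part1: "\<forall>B'. trans C [A1, A3, B'] \<longrightarrow>
        induces_iso C A3 B' A1 B' (\<lambda>x. mu C [A1, A3, B'] [mu C [A1, A2, A3] [e12, e23], x])"
  proof (intro allI impI)
    fix B' assume tb: "trans C [A1, A3, B']"
    have "finite {[A1,A2,A3],[A1,A3,B']} \<and> (\<forall>s\<in>{[A1,A2,A3],[A1,A3,B']}. trans C s)" using t123 tb by simp
    then have "\<exists>Am Ap. (\<exists>g. quasi_iso C Am B' g) \<and> (\<exists>h. quasi_iso C B' Ap h) \<and>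
                 (\<forall>s\<in>{[A1,A2,A3],[A1,A3,B']}. trans C (Am # s @ [Ap]))" by (rule un[rule_format])
    then obtain Am Ap where h: "\<exists>h. quasi_iso C B' Ap h"
      and ts: "\<forall>s\<in>{[A1,A2,A3],[A1,A3,B']}. trans C (Am # s @ [Ap])"
      by blast
    obtain hh where qh: "quasi_iso C B' Ap hh" using h by blast
    have a: "trans C [Am,A1,A2,A3,Ap]" and b: "trans C [Am,A1,A3,B',Ap]" using ts by simp_all
    have "subseq [A1,A2,A3,Ap] [Am,A1,A2,A3,Ap]" "subseq [A1,A3,B',Ap] [Am,A1,A3,B',Ap]"
      by (rule subseq_Cons2 | rule list_emb_Cons | rule list_emb_Nil)+
    then have t4: "trans C [A1,A2,A3,Ap]" and t4': "trans C [A1,A3,B',Ap]"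
      using trans_sub[OF a] trans_sub[OF b] by simp_all
    have e: "eiso A3 B' A1 B' (\<lambda>x. mu C [A1, A3, B'] [mu C [A1, A2, A3] [e12, e23], x])"
      by (rule side1[OF t4 t4' assms(4,5) qh])
    have "induces_iso C A3 B' A1 B' (\<lambda>x. mu C [A1, A3, B'] [mu C [A1, A2, A3] [e12, e23], x])
       \<longleftrightarrow> eiso A3 B' A1 B' (\<lambda>x. mu C [A1, A3, B'] [mu C [A1, A2, A3] [e12, e23], x])"
      by (rule eiso_iff[where phi="\<lambda>x. mu C [A1, A3, B'] [mu C [A1, A2, A3] [e12, e23], x]",
            OF tr2(2)[OF tb] tr2(3)[OF tb] R_props(3)[OF tb c13]])
    then show "induces_iso C A3 B' A1 B' (\<lambda>x. mu C [A1, A3, B'] [mu C [A1, A2, A3] [e12, e23], x])"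
      using e by simp
  qed
  have part2: "\<forall>B. trans C [B, A1, A3] \<longrightarrow>
        induces_iso C B A1 B A3 (\<lambda>x. mu C [B, A1, A3] [x, mu C [A1, A2, A3] [e12, e23]])"
  proof (intro allI impI)
    fix B assume tb: "trans C [B, A1, A3]"
    have "finite {[A1,A2,A3],[B,A1,A3]} \<and> (\<forall>s\<in>{[A1,A2,A3],[B,A1,A3]}. trans C s)" using t123 tb by simp
    then have "\<exists>Am Ap. (\<exists>g. quasi_iso C Am B g) \<and> (\<exists>h. quasi_iso C B Ap h) \<and>
                 (\<forall>s\<in>{[A1,A2,A3],[B,A1,A3]}. trans C (Am # s @ [Ap]))" by (rule un[rule_format])
    then obtain Am Ap where h: "\<exists>g. quasi_iso C Am B g"
      and ts: "\<forall>s\<in>{[A1,A2,A3],[B,A1,A3]}. trans C (Am # s @ [Ap])"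
      by blast
    obtain g where qg: "quasi_iso C Am B g" using h by blast
    have a: "trans C [Am,A1,A2,A3,Ap]" and b: "trans C [Am,B,A1,A3,Ap]" using ts by simp_all
    have "subseq [Am,A1,A2,A3] [Am,A1,A2,A3,Ap]" "subseq [Am,B,A1,A3] [Am,B,A1,A3,Ap]"
      by (rule subseq_Cons2 | rule list_emb_Cons | rule list_emb_Nil)+
    then have t4: "trans C [Am,A1,A2,A3]" and t4': "trans C [Am,B,A1,A3]"
      using trans_sub[OF a] trans_sub[OF b] by simp_all
    have e: "eiso B A1 B A3 (\<lambda>x. mu C [B, A1, A3] [x, mu C [A1, A2, A3] [e12, e23]])"
      by (rule side2[OF t4 t4' assms(4,5) qg])
    have "induces_iso C B A1 B A3 (\<lambda>x. mu C [B, A1, A3] [x, mu C [A1, A2, A3] [e12, e23]])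
       \<longleftrightarrow> eiso B A1 B A3 (\<lambda>x. mu C [B, A1, A3] [x, mu C [A1, A2, A3] [e12, e23]])"
      by (rule eiso_iff[where phi="\<lambda>x. mu C [B, A1, A3] [x, mu C [A1, A2, A3] [e12, e23]]",
            OF tr2(1)[OF tb] tr2(3)[OF tb] L_props(3)[OF tb c13]])
    then show "induces_iso C B A1 B A3 (\<lambda>x. mu C [B, A1, A3] [x, mu C [A1, A2, A3] [e12, e23]])"
      using e by simp
  qed
  have mm: "mu C [A1, A2, A3] [e12, e23] \<in> mor C A1 A3" and mz: "mu C [A1, A3] [mu C [A1, A2, A3] [e12, e23]] = 0"
    using c13 by (simp_all add: cyc_iff)
  show ?thesis unfolding quasi_iso_def by (intro conjI p13 mm mz part1 part2)
qed

end
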